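(* Let $M,K\in\mathbb{R}^{m\times m}$ be symmetric positive definite, $\nu>0$, $\omega>0$, $\theta=1+\nu\omega^2$. Let $\lambda_{\min},\lambda_{\max}$ (resp. $\mu_{\min},\mu_{\max}$) be the smallest and largest eigenvalues of $M$ (resp. $K$). Define for $\alpha>0$ \[ \chi(\alpha)=\max_{\lambda\in\sigma(M)}\frac{\sqrt{\alpha^2+\theta^2\lambda^2}}{\alpha+\theta\lambda},\qquad \vartheta(\alpha)=\max_{\mu\in\sigma(K)}\frac{\sqrt{\alpha^2+\nu\theta\mu^2}}{\alpha+\sqrt{\nu\theta}\,\mu}. \] Then $\alpha_1=\theta\sqrt{\lambda_{\min}\lambda_{\max}}$ minimizes $\chi$ over $\alpha>0$ and $\alpha_2=\sqrt{\nu\theta\,\mu_{\min}\mu_{\max}}$ minimizes $\vartheta$ over $\alpha>0$. Moreover, with $P_\alpha$ the MBAS iteration matrix defined in the context, $\rho(P_\alpha)\le\chi(\alpha)$ and $\rho(P_\alpha)\le\vartheta(\alpha)$ for all $\alpha>0$.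
   Context: $\sigma(\cdot)$ is the spectrum and $\rho(\cdot)$ the spectral radius. With $I$ the $m\times m$ identity, $H_1=\begin{pmatrix} M&0\\0&M\end{pmatrix}$, $H_2=\begin{pmatrix} K&0\\0&K\end{pmatrix}$, $R=\frac{1}{\sqrt{\nu\theta}}\begin{pmatrix} -i\omega\nu I & \sqrt{\nu} I\\ -\sqrt{\nu} I & i\omega\nu I\end{pmatrix}$, the MBAS iteration matrix is $P_\alpha=(\alpha I_{2m}+\sqrt{\nu\theta}H_2)^{-1}(\alpha I_{2m}+\theta RH_1)(\alpha I_{2m}+\theta H_1)^{-1}(\alpha I_{2m}-\sqrt{\nu\theta}RH_2)$. *)

theory Defs
  imports "Jordan_Normal_Form.Spectral_Radius" "Jordan_Normal_Form.Gauss_Jordan_Elimination"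
begin

definition spd_mat :: "nat \<Rightarrow> real mat \<Rightarrow> bool" where
  "spd_mat m A \<longleftrightarrow> A \<in> carrier_mat m m \<and> transpose_mat A = A \<and>
     (\<forall>v \<in> carrier_vec m. v \<noteq> 0\<^sub>v m \<longrightarrow> scalar_prod v (A *\<^sub>v v) > 0)"

definition minv :: "complex mat \<Rightarrow> complex mat" where
  "minv A = the (mat_inverse A)"

definition chi :: "real mat \<Rightarrow> real \<Rightarrow> real \<Rightarrow> real" where
  "chi M \<theta> \<alpha> = Max ((\<lambda>l. sqrt (\<alpha>\<^sup>2 + \<theta>\<^sup>2 * l\<^sup>2) / (\<alpha> + \<theta> * l)) ` spectrum M)"

definition vtheta :: "real mat \<Rightarrow> real \<Rightarrow> real \<Rightarrow> real \<Rightarrow> real" where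
  "vtheta K \<nu> \<theta> \<alpha> = Max ((\<lambda>u. sqrt (\<alpha>\<^sup>2 + \<nu> * \<theta> * u\<^sup>2) / (\<alpha> + sqrt (\<nu> * \<theta>) * u)) ` spectrum K)"

definition cmat :: "real mat \<Rightarrow> complex mat" where
  "cmat A = map_mat complex_of_real A"

definition blockdiag :: "nat \<Rightarrow> complex mat \<Rightarrow> complex mat" where
  "blockdiag m A = four_block_mat A (0\<^sub>m m m) (0\<^sub>m m m) A"

definition Rmat :: "nat \<Rightarrow> real \<Rightarrow> real \<Rightarrow> real \<Rightarrow> complex mat" where
  "Rmat m \<nu> \<omega> \<theta> = (complex_of_real (1 / sqrt (\<nu> * \<theta>))) \<cdot>\<^sub>m
     four_block_mat ((- \<i> * complex_of_real (\<omega> * \<nu>)) \<cdot>\<^sub>m 1\<^sub>m m) (complex_of_real (sqrt \<nu>) \<cdot>\<^sub>m 1\<^sub>m m)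
                    ((- complex_of_real (sqrt \<nu>)) \<cdot>\<^sub>m 1\<^sub>m m) ((\<i> * complex_of_real (\<omega> * \<nu>)) \<cdot>\<^sub>m 1\<^sub>m m)"

definition MBAS :: "nat \<Rightarrow> real mat \<Rightarrow> real mat \<Rightarrow> real \<Rightarrow> real \<Rightarrow> real \<Rightarrow> complex mat" where
  "MBAS m M K \<nu> \<omega> \<alpha> = (let \<theta> = 1 + \<nu> * \<omega>\<^sup>2; H1 = blockdiag m (cmat M); H2 = blockdiag m (cmat K);
      R = Rmat m \<nu> \<omega> \<theta>; I = 1\<^sub>m (2*m); a = complex_of_real \<alpha>;
      s = complex_of_real (sqrt (\<nu> * \<theta>)); t = complex_of_real \<theta> in
     minv (a \<cdot>\<^sub>m I + s \<cdot>\<^sub>m H2) * (a \<cdot>\<^sub>m I + t \<cdot>\<^sub>m (R * H1)) *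
     minv (a \<cdot>\<^sub>m I + t \<cdot>\<^sub>m H1) * (a \<cdot>\<^sub>m I - s \<cdot>\<^sub>m (R * H2)))"

end

theory Submission
  imports Defs
begin


definition gf :: "real \<Rightarrow> real \<Rightarrow> real \<Rightarrow> real" where
  "gf c a l = sqrt (a\<^sup>2 + c\<^sup>2 * l\<^sup>2) / (a + c * l)"

lemma gf_sq: assumes "a > 0" "c > 0" "l > 0"
  shows "(gf c a l)\<^sup>2 = (a\<^sup>2 + c\<^sup>2 * l\<^sup>2) / (a + c * l)\<^sup>2"
  using assms unfolding gf_def by (simp add: power_divide)

lemma gf_nonneg: assumes "a > 0" "c > 0" "l > 0" shows "gf c a l \<ge> 0"
  using assms unfolding gf_def by simp

lemma gf_le_iff: assumes "a > 0" "b > 0" "c > 0" "l > 0" "u > 0"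
  shows "gf c a l \<le> gf c b u \<longleftrightarrow> (a\<^sup>2 + c\<^sup>2 * l\<^sup>2) * (b + c * u)\<^sup>2 \<le> (b\<^sup>2 + c\<^sup>2 * u\<^sup>2) * (a + c * l)\<^sup>2"
proof -
  have q1: "a + c*l > 0" "b + c*u > 0" using assms by (simp_all add: add_pos_pos)
  have p1: "(a + c*l)\<^sup>2 > 0" "(b + c*u)\<^sup>2 > 0" using q1 by auto
  have "gf c a l \<le> gf c b u \<longleftrightarrow> (gf c a l)\<^sup>2 \<le> (gf c b u)\<^sup>2"
    using gf_nonneg[OF assms(1,3,4)] gf_nonneg[OF assms(2,3,5)] by (simp add: power2_le_iff_abs_le abs_le_square_iff)
  also have "\<dots> \<longleftrightarrow> (a\<^sup>2 + c\<^sup>2 * l\<^sup>2) / (a + c * l)\<^sup>2 \<le> (b\<^sup>2 + c\<^sup>2 * u\<^sup>2) / (b + c * u)\<^sup>2"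
    using gf_sq assms by simp
  also have "\<dots> \<longleftrightarrow> (a\<^sup>2 + c\<^sup>2 * l\<^sup>2) * (b + c * u)\<^sup>2 \<le> (b\<^sup>2 + c\<^sup>2 * u\<^sup>2) * (a + c * l)\<^sup>2"
    using p1 by (simp add: divide_le_eq le_divide_eq field_simps)
  finally show ?thesis .
qed

lemma gf_le_1: assumes "a > 0" "c > 0" "l > 0" shows "gf c a l < 1"
proof -
  have "sqrt (a\<^sup>2 + c\<^sup>2 * l\<^sup>2) < sqrt ((a + c*l)\<^sup>2)"
    using assms by (intro real_sqrt_less_mono) (simp add: power2_eq_square algebra_simps)
  moreover have "a + c*l > 0" using assms by (simp add: add_pos_pos)
  ultimately show ?thesis using assms unfolding gf_def by (simp add: divide_less_eq)
qed

lemma minA: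
  assumes S: "finite S" "S \<noteq> {}" "\<forall>x\<in>S. x > 0" and c: "c > 0" and al: "al > 0"
  shows "Max (gf c (c * sqrt (Min S * Max S)) ` S) \<le> Max (gf c al ` S)"
proof -
  define a where "a = Min S" define b where "b = Max S"
  have aS: "a \<in> S" "b \<in> S" using S a_def b_def by auto
  have a0: "a > 0" "b > 0" using aS S by auto
  have ab: "\<And>x. x \<in> S \<Longrightarrow> a \<le> x \<and> x \<le> b" using S a_def b_def by auto
  define r where "r = sqrt (a * b)"
  have r0: "r > 0" using a0 r_def by simp
  have rr: "r\<^sup>2 = a * b" using a0 r_def by simp
  have "a \<le> b" using ab aS by blast
  have ar: "a \<le> r" "r \<le> b"
  proof -
    have "a\<^sup>2 \<le> r\<^sup>2" "r\<^sup>2 \<le> b\<^sup>2" using rr \<open>a\<le>b\<close> a0 by (auto simp: power2_eq_square intro: mult_left_mono mult_right_mono)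
    then show "a \<le> r" "r \<le> b" using r0 a0 by (auto simp: power2_le_iff_abs_le abs_le_square_iff)
  qed
  define a1 where "a1 = c * r"
  have a10: "a1 > 0" using a1_def r0 c by simp
  have s1: "gf c a1 x \<le> gf c a1 b" if "x \<in> S" for x
  proof -
    have x: "a \<le> x" "x \<le> b" "x > 0" using ab that S by auto
    have "(r\<^sup>2 + x\<^sup>2) * (r + b)\<^sup>2 \<le> (r\<^sup>2 + b\<^sup>2) * (r + x)\<^sup>2"
    proof -
      have "(r\<^sup>2 + b\<^sup>2) * (r + x)\<^sup>2 - (r\<^sup>2 + x\<^sup>2) * (r + b)\<^sup>2 = 2*r*(x - b)*(r\<^sup>2 - x*b)"
        by (simp add: power2_eq_square algebra_simps)
      also have "\<dots> = 2*r*(b - x)*(b*(x - a))" using rr by (simp add: algebra_simps)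
      also have "\<dots> \<ge> 0" using x r0 a0 by simp
      finally show ?thesis by simp
    qed
    then have "c^4 * ((r\<^sup>2 + x\<^sup>2) * (r + b)\<^sup>2) \<le> c^4 * ((r\<^sup>2 + b\<^sup>2) * (r + x)\<^sup>2)"
      using c by simp
    then show ?thesis using gf_le_iff[OF a10 a10 c x(3) a0(2)] unfolding a1_def
      by (simp add: power2_eq_square power4_eq_xxxx algebra_simps)
  qed
  have sym: "gf c a1 a = gf c a1 b"
  proof -
    have "(r\<^sup>2 + a\<^sup>2) * (r + b)\<^sup>2 = (r\<^sup>2 + b\<^sup>2) * (r + a)\<^sup>2"
    proof -
      have "(r\<^sup>2 + b\<^sup>2) * (r + a)\<^sup>2 - (r\<^sup>2 + a\<^sup>2) * (r + b)\<^sup>2 = 2*r*(a - b)*(r\<^sup>2 - a*b)"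
        by (simp add: power2_eq_square algebra_simps)
      then show ?thesis using rr by simp
    qed
    then have e: "c^4 * ((r\<^sup>2 + a\<^sup>2) * (r + b)\<^sup>2) = c^4 * ((r\<^sup>2 + b\<^sup>2) * (r + a)\<^sup>2)" by simp
    have "gf c a1 a \<le> gf c a1 b" "gf c a1 b \<le> gf c a1 a"
      using gf_le_iff[OF a10 a10 c a0(1) a0(2)] gf_le_iff[OF a10 a10 c a0(2) a0(1)] e unfolding a1_def
      by (simp_all add: power2_eq_square power4_eq_xxxx algebra_simps)
    then show ?thesis by simp
  qed
  define u where "u = al / c"
  have u0: "u > 0" using al c u_def by simp
  have alu: "al = c * u" using u_def c by simp
  have s2: "\<exists>x\<in>S. gf c a1 b \<le> gf c al x"
  proof (cases "u \<le> r")
    case True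
    have "(r\<^sup>2 + b\<^sup>2) * (u + b)\<^sup>2 \<le> (u\<^sup>2 + b\<^sup>2) * (r + b)\<^sup>2"
    proof -
      have "(u\<^sup>2 + b\<^sup>2) * (r + b)\<^sup>2 - (r\<^sup>2 + b\<^sup>2) * (u + b)\<^sup>2 = 2*b*(r - u)*(b\<^sup>2 - u*r)"
        by (simp add: power2_eq_square algebra_simps)
      also have "\<dots> \<ge> 0"
      proof -
        have "u * r \<le> r * r" using True r0 by (simp add: mult_right_mono)
        also have "r * r \<le> b * b" using ar r0 by (simp add: mult_mono)
        finally show ?thesis using True a0 by (simp add: power2_eq_square)
      qed
      finally show ?thesis by simp
    qed
    then have "c^4 * ((r\<^sup>2 + b\<^sup>2) * (u + b)\<^sup>2) \<le> c^4 * ((u\<^sup>2 + b\<^sup>2) * (r + b)\<^sup>2)" using c by simp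
    then have "gf c a1 b \<le> gf c al b"
      using gf_le_iff[OF a10 al c a0(2) a0(2)] unfolding a1_def alu
      by (simp add: power2_eq_square power4_eq_xxxx algebra_simps)
    then show ?thesis using aS by blast
  next
    case False
    have "(r\<^sup>2 + a\<^sup>2) * (u + a)\<^sup>2 \<le> (u\<^sup>2 + a\<^sup>2) * (r + a)\<^sup>2"
    proof -
      have "(u\<^sup>2 + a\<^sup>2) * (r + a)\<^sup>2 - (r\<^sup>2 + a\<^sup>2) * (u + a)\<^sup>2 = 2*a*(r - u)*(a\<^sup>2 - u*r)"
        by (simp add: power2_eq_square algebra_simps)
      also have "\<dots> \<ge> 0"
      proof -
        have "a * a \<le> r * r" using ar a0 by (simp add: mult_mono)
        also have "r * r \<le> u * r" using False r0 by (simp add: mult_right_mono)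
        finally have "a\<^sup>2 - u*r \<le> 0" by (simp add: power2_eq_square)
        moreover have "r - u \<le> 0" using False by simp
        ultimately show ?thesis using a0 by (simp add: mult_nonpos_nonpos)
      qed
      finally show ?thesis by simp
    qed
    then have "c^4 * ((r\<^sup>2 + a\<^sup>2) * (u + a)\<^sup>2) \<le> c^4 * ((u\<^sup>2 + a\<^sup>2) * (r + a)\<^sup>2)" using c by simp
    then have "gf c a1 a \<le> gf c al a"
      using gf_le_iff[OF a10 al c a0(1) a0(1)] unfolding a1_def alu
      by (simp add: power2_eq_square power4_eq_xxxx algebra_simps)
    then show ?thesis using aS sym by auto
  qed
  have "Max (gf c a1 ` S) \<le> gf c a1 b"
    using S s1 by (simp add: Max_le_iff)
  also obtain x where "x \<in> S" "gf c a1 b \<le> gf c al x" using s2 by blast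
  then have "gf c a1 b \<le> Max (gf c al ` S)" using S by (meson Max_ge finite_imageI image_eqI order_trans)
  finally show ?thesis unfolding a1_def r_def a_def b_def .
qed



definition nsq :: "complex vec \<Rightarrow> real" where "nsq v = Re (v \<bullet>c v)"

lemma ip_add_left: "u \<in> carrier_vec n \<Longrightarrow> v \<in> carrier_vec n \<Longrightarrow> w \<in> carrier_vec n \<Longrightarrow>
  (u + v) \<bullet>c w = u \<bullet>c w + v \<bullet>c w"
  by (rule add_scalar_prod_distrib[of _ n], auto)

lemma ip_add_right: "u \<in> carrier_vec n \<Longrightarrow> v \<in> carrier_vec n \<Longrightarrow> w \<in> carrier_vec n \<Longrightarrow>
  u \<bullet>c (v + w) = u \<bullet>c v + u \<bullet>c w"
  by (simp add: conjugate_add_vec[of _ n] scalar_prod_add_distrib[of _ n])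

lemma ip_smult_left: "u \<in> carrier_vec n \<Longrightarrow> w \<in> carrier_vec n \<Longrightarrow>
  (a \<cdot>\<^sub>v u) \<bullet>c w = a * (u \<bullet>c w)"
  by (rule smult_scalar_prod_distrib[of _ n], auto)

lemma ip_smult_right: "u \<in> carrier_vec n \<Longrightarrow> w \<in> carrier_vec n \<Longrightarrow>
  u \<bullet>c (a \<cdot>\<^sub>v w) = cnj a * (u \<bullet>c w)"
  by (simp add: conjugate_smult_vec scalar_prod_smult_distrib[of _ n])

lemma ip_sym: "u \<in> carrier_vec n \<Longrightarrow> w \<in> carrier_vec n \<Longrightarrow> w \<bullet>c u = cnj (u \<bullet>c w)"
  by (metis conjugate_complex_def conjugate_conjugate_sprod conjugate_vec_sprod_comm)

lemma ip_self_real: "v \<bullet>c v = complex_of_real (nsq v)"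
proof -
  have "v \<bullet>c v \<ge> 0" by auto
  then show ?thesis unfolding nsq_def by (simp add: complex_eq_iff less_eq_complex_def)
qed

lemma nsq_nonneg: "nsq v \<ge> 0"
  using conjugate_square_ge_0_vec[of v] unfolding nsq_def by (simp add: less_eq_complex_def)

lemma nsq_eq_0: "v \<in> carrier_vec n \<Longrightarrow> nsq v = 0 \<longleftrightarrow> v = 0\<^sub>v n"
  using ip_self_real[of v] conjugate_square_eq_0_vec[of v n] by auto

lemma nsq_add: "u \<in> carrier_vec n \<Longrightarrow> w \<in> carrier_vec n \<Longrightarrow>
  nsq (u + w) = nsq u + nsq w + 2 * Re (u \<bullet>c w)"
  unfolding nsq_def
  by (simp add: ip_add_left[of _ n] ip_add_right[of _ n] ip_sym[of w n u])

lemma nsq_smult: assumes "u \<in> carrier_vec n" shows "nsq (a \<cdot>\<^sub>v u) = (cmod a)\<^sup>2 * nsq u"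
proof -
  have "(a \<cdot>\<^sub>v u) \<bullet>c (a \<cdot>\<^sub>v u) = (a * cnj a) * (u \<bullet>c u)"
    using assms by (simp add: ip_smult_left[of _ n] ip_smult_right[of _ n])
  also have "\<dots> = complex_of_real ((cmod a)\<^sup>2 * nsq u)"
    by (simp add: ip_self_real complex_norm_square[symmetric])
  finally show ?thesis unfolding nsq_def by simp
qed

lemma cmat_carrier[simp]: "N \<in> carrier_mat n m \<Longrightarrow> cmat N \<in> carrier_mat n m"
  unfolding cmat_def by simp

lemma cmat_dims[simp]: "dim_row (cmat N) = dim_row N" "dim_col (cmat N) = dim_col N"
  unfolding cmat_def by simp_all

lemma cmat_index: assumes "N \<in> carrier_mat n n" "v \<in> carrier_vec n" "i < n"
  shows "(cmat N *\<^sub>v v) $ i = (\<Sum>j<n. complex_of_real (N $$ (i,j)) * v $ j)"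
  using assms unfolding cmat_def by (auto simp: scalar_prod_def lessThan_atLeast0 intro!: sum.cong)

lemma real_index: assumes "N \<in> carrier_mat n n" "v \<in> carrier_vec n" "i < n"
  shows "(N *\<^sub>v v) $ i = (\<Sum>j<n. N $$ (i,j) * v $ j)"
  using assms by (auto simp: scalar_prod_def lessThan_atLeast0 intro!: sum.cong)

definition symm :: "nat \<Rightarrow> real mat \<Rightarrow> bool" where
  "symm n N \<longleftrightarrow> N \<in> carrier_mat n n \<and> transpose_mat N = N"

lemma symm_entry: assumes "symm n N" "i < n" "j < n" shows "N $$ (j,i) = N $$ (i,j)"
proof -
  have Nc: "N \<in> carrier_mat n n" and t: "transpose_mat N = N" using assms unfolding symm_def by auto
  have "N $$ (j,i) = (transpose_mat N) $$ (i,j)" using Nc assms by simp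
  then show ?thesis using t by simp
qed

lemma cmat_entry[simp]: "i < dim_row N \<Longrightarrow> j < dim_col N \<Longrightarrow> cmat N $$ (i,j) = complex_of_real (N $$ (i,j))"
  unfolding cmat_def by simp

lemma herm_ip: assumes N: "symm n N" and u: "u \<in> carrier_vec n" and w: "w \<in> carrier_vec n"
  shows "(cmat N *\<^sub>v u) \<bullet>c w = u \<bullet>c (cmat N *\<^sub>v w)"
proof -
  have Nc: "N \<in> carrier_mat n n" using N unfolding symm_def by auto
  have "(cmat N *\<^sub>v u) \<bullet>c w = (\<Sum>i<n. (\<Sum>j<n. complex_of_real (N $$ (i,j)) * u $ j) * cnj (w $ i))"
    using u w Nc by (auto simp: scalar_prod_def lessThan_atLeast0 cmat_index intro!: sum.cong)
  also have "\<dots> = (\<Sum>i<n. \<Sum>j<n. complex_of_real (N $$ (i,j)) * u $ j * cnj (w $ i))"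
    by (simp add: sum_distrib_right)
  also have "\<dots> = (\<Sum>j<n. \<Sum>i<n. complex_of_real (N $$ (i,j)) * u $ j * cnj (w $ i))"
    by (rule sum.swap)
  also have "\<dots> = (\<Sum>j<n. u $ j * cnj (\<Sum>i<n. complex_of_real (N $$ (j,i)) * w $ i))"
    using symm_entry[OF N] by (auto simp: sum_distrib_left intro!: sum.cong)
  also have "\<dots> = u \<bullet>c (cmat N *\<^sub>v w)"
    using u w Nc by (auto simp: scalar_prod_def lessThan_atLeast0 cmat_index intro!: sum.cong)
  finally show ?thesis .
qed

lemma eig_real: assumes N: "symm n N" and ev: "eigenvalue (cmat N) k"
  shows "k = complex_of_real (Re k)" "eigenvalue N (Re k)"
proof -
  have Nc: "N \<in> carrier_mat n n" using N unfolding symm_def by auto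
  obtain v where v: "v \<in> carrier_vec n" "v \<noteq> 0\<^sub>v n" "cmat N *\<^sub>v v = k \<cdot>\<^sub>v v"
    using ev Nc unfolding eigenvalue_def eigenvector_def by auto
  have "k * (v \<bullet>c v) = cnj k * (v \<bullet>c v)"
    using herm_ip[OF N v(1) v(1)] v by (simp add: ip_smult_left[of _ n] ip_smult_right[of _ n])
  moreover have "v \<bullet>c v \<noteq> 0" using v conjugate_square_eq_0_vec[of v n] by auto
  ultimately have kk: "k = cnj k" by simp
  then show k: "k = complex_of_real (Re k)" by (metis Reals_cnj_iff complex_is_Real_iff of_real_Re)
  have Imk: "Im k = 0" using kk by (metis cnj.simps(2) neg_equal_zero)
  define a where "a = vec n (\<lambda>i. Re (v $ i))"
  define b where "b = vec n (\<lambda>i. Im (v $ i))"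
  have ent: "(\<Sum>j<n. complex_of_real (N $$ (i,j)) * v $ j) = k * v $ i" if "i < n" for i
    using cmat_index[OF Nc v(1) that] v(3) that v(1) by simp
  have Na: "N *\<^sub>v a = Re k \<cdot>\<^sub>v a"
  proof (rule eq_vecI)
    fix i assume "i < dim_vec (Re k \<cdot>\<^sub>v a)"
    then have i: "i < n" unfolding a_def by simp
    have "(N *\<^sub>v a) $ i = (\<Sum>j<n. N $$ (i,j) * Re (v $ j))"
      using real_index[OF Nc _ i, of a] unfolding a_def by simp
    also have "\<dots> = Re (\<Sum>j<n. complex_of_real (N $$ (i,j)) * v $ j)" by (simp add: Re_sum)
    also have "\<dots> = Re (k * v $ i)" using ent[OF i] by simp
    also have "\<dots> = Re k * Re (v $ i)" using Imk by simp
    finally show "(N *\<^sub>v a) $ i = (Re k \<cdot>\<^sub>v a) $ i" using i unfolding a_def by simp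
  qed (use Nc in \<open>simp add: a_def\<close>)
  have Nb: "N *\<^sub>v b = Re k \<cdot>\<^sub>v b"
  proof (rule eq_vecI)
    fix i assume "i < dim_vec (Re k \<cdot>\<^sub>v b)"
    then have i: "i < n" unfolding b_def by simp
    have "(N *\<^sub>v b) $ i = (\<Sum>j<n. N $$ (i,j) * Im (v $ j))"
      using real_index[OF Nc _ i, of b] unfolding b_def by simp
    also have "\<dots> = Im (\<Sum>j<n. complex_of_real (N $$ (i,j)) * v $ j)" by (simp add: Im_sum)
    also have "\<dots> = Im (k * v $ i)" using ent[OF i] by simp
    also have "\<dots> = Re k * Im (v $ i)" using Imk by simp
    finally show "(N *\<^sub>v b) $ i = (Re k \<cdot>\<^sub>v b) $ i" using i unfolding b_def by simp
  qed (use Nc in \<open>simp add: b_def\<close>)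
  have "a \<noteq> 0\<^sub>v n \<or> b \<noteq> 0\<^sub>v n"
  proof (rule ccontr)
    assume "\<not> ?thesis"
    then have "a = 0\<^sub>v n" "b = 0\<^sub>v n" by auto
    have "v $ i = 0" if i: "i < n" for i
    proof -
      have "a $ i = 0" "b $ i = 0" using \<open>a = 0\<^sub>v n\<close> \<open>b = 0\<^sub>v n\<close> i by auto
      then show ?thesis using i unfolding a_def b_def by (simp add: complex_eq_iff)
    qed
    then have "v = 0\<^sub>v n" using v(1) by (intro eq_vecI) auto
    then show False using v by simp
  qed
  then show "eigenvalue N (Re k)"
  proof
    assume "a \<noteq> 0\<^sub>v n"
    moreover have "a \<in> carrier_vec n" unfolding a_def by simp
    ultimately show ?thesis unfolding eigenvalue_def eigenvector_def using Na Nc by auto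
  next
    assume "b \<noteq> 0\<^sub>v n"
    moreover have "b \<in> carrier_vec n" unfolding b_def by simp
    ultimately show ?thesis unfolding eigenvalue_def eigenvector_def using Nb Nc by auto
  qed
qed



lemma nsq_sum: "nsq w = (\<Sum>i<dim_vec w. (cmod (w $ i))\<^sup>2)"
proof -
  have "w \<bullet>c w = (\<Sum>i<dim_vec w. complex_of_real ((cmod (w $ i))\<^sup>2))"
    by (auto simp: scalar_prod_def lessThan_atLeast0 simp del: of_real_power intro!: sum.cong)
       (metis complex_norm_square)
  then show ?thesis unfolding nsq_def by (simp add: Re_sum)
qed

lemma pow_comm: assumes "H \<in> carrier_mat n n" shows "H ^\<^sub>m k * H = H * H ^\<^sub>m k"
proof (induct k)
  case 0 then show ?case using assms by simp
next
  case (Suc k)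
  have "H ^\<^sub>m Suc k * H = (H ^\<^sub>m k * H) * H" by simp
  also have "\<dots> = (H * H ^\<^sub>m k) * H" using Suc by simp
  also have "\<dots> = H * (H ^\<^sub>m k * H)" using assms by (simp add: assoc_mult_mat[of _ n n _ n _ n])
  finally show ?case by simp
qed

lemma norm_bound_vec: assumes A: "A \<in> carrier_mat n n" and b: "norm_bound A c" and z: "z \<in> carrier_vec n"
  shows "nsq (A *\<^sub>v z) \<le> real n * (c * (\<Sum>j<n. cmod (z $ j)))\<^sup>2"
proof -
  have ent: "cmod ((A *\<^sub>v z) $ i) \<le> c * (\<Sum>j<n. cmod (z $ j))" if i: "i < n" for i
  proof -
    have "(A *\<^sub>v z) $ i = (\<Sum>j<n. A $$ (i,j) * z $ j)"
      using A z i by (auto simp: scalar_prod_def lessThan_atLeast0 intro!: sum.cong)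
    also have "cmod \<dots> \<le> (\<Sum>j<n. cmod (A $$ (i,j) * z $ j))" by (rule norm_sum)
    also have "\<dots> \<le> (\<Sum>j<n. c * cmod (z $ j))"
    proof (rule sum_mono)
      fix j assume "j \<in> {..<n}"
      then have "cmod (A $$ (i,j)) \<le> c" using b A i unfolding norm_bound_def by auto
      then show "cmod (A $$ (i,j) * z $ j) \<le> c * cmod (z $ j)"
        by (simp add: norm_mult mult_right_mono)
    qed
    finally show ?thesis by (simp add: sum_distrib_left)
  qed
  have "nsq (A *\<^sub>v z) = (\<Sum>i<n. (cmod ((A *\<^sub>v z) $ i))\<^sup>2)" using A by (simp add: nsq_sum)
  also have "\<dots> \<le> (\<Sum>i<n. (c * (\<Sum>j<n. cmod (z $ j)))\<^sup>2)"
    by (rule sum_mono, rule power_mono, auto intro: ent)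
  also have "\<dots> = real n * (c * (\<Sum>j<n. cmod (z $ j)))\<^sup>2" by simp
  finally show ?thesis .
qed

lemma logconv: assumes N: "symm n N" and u: "u \<in> carrier_vec n"
  shows "2 * t * nsq (cmat N *\<^sub>v u) \<le> t\<^sup>2 * nsq u + nsq (cmat N *\<^sub>v (cmat N *\<^sub>v u))"
proof -
  have Nc: "N \<in> carrier_mat n n" using N unfolding symm_def by auto
  define H where "H = cmat N"
  have H: "H \<in> carrier_mat n n" using Nc H_def by simp
  define w where "w = H *\<^sub>v (H *\<^sub>v u)"
  have w: "w \<in> carrier_vec n" using H u w_def by simp
  have hu: "H *\<^sub>v u \<in> carrier_vec n" using H u by simp
  have "w \<bullet>c u = complex_of_real (nsq (H *\<^sub>v u))"
    using herm_ip[OF N hu u] unfolding w_def H_def by (simp add: ip_self_real)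
  then have ipw: "u \<bullet>c w = complex_of_real (nsq (H *\<^sub>v u))"
    using ip_sym[OF w u] by simp
  have "0 \<le> nsq (complex_of_real t \<cdot>\<^sub>v u + (-1) \<cdot>\<^sub>v w)" by (rule nsq_nonneg)
  also have "\<dots> = t\<^sup>2 * nsq u + nsq w - 2 * t * nsq (H *\<^sub>v u)"
    using u w
    by (simp add: nsq_add[of _ n] nsq_smult[of _ n] ip_smult_left[of _ n] ip_smult_right[of _ n] ipw)
  finally show ?thesis unfolding w_def H_def by simp
qed

lemma G1: assumes N: "symm n N" and sp: "\<forall>l\<in>spectrum N. \<bar>l\<bar> < 1" and z: "z \<in> carrier_vec n"
  shows "nsq (cmat N *\<^sub>v z) \<le> nsq z"
proof (cases "n = 0")
  case True
  have Nc: "N \<in> carrier_mat n n" using N unfolding symm_def by auto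
  have "dim_vec (cmat N *\<^sub>v z) = 0" using True Nc by simp
  then have "nsq (cmat N *\<^sub>v z) = 0" by (simp add: nsq_sum)
  then show ?thesis using nsq_nonneg[of z] by simp
next
  case False
  then have n: "n > 0" by simp
  have Nc: "N \<in> carrier_mat n n" using N unfolding symm_def by auto
  define H where "H = cmat N"
  have H: "H \<in> carrier_mat n n" using Nc H_def by simp
  have sr: "spectral_radius H < 1"
  proof -
    obtain k where k: "k \<in> spectrum H" "spectral_radius H = norm k"
      using spectral_radius_mem_max(1)[OF H n] by auto
    have ev: "eigenvalue (cmat N) k" using k unfolding spectrum_def H_def by simp
    have "Re k \<in> spectrum N" using eig_real(2)[OF N ev] unfolding spectrum_def by simp
    then have "\<bar>Re k\<bar> < 1" using sp by auto
    moreover have "norm k = \<bar>Re k\<bar>" using eig_real(1)[OF N ev] by (metis norm_of_real)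
    ultimately show ?thesis using k by simp
  qed
  obtain as where cA: "char_poly H = (\<Prod>a\<leftarrow>as. [:- a, 1:])"
    using char_poly_factorized[OF H] by auto
  obtain c where nb: "\<And>k. norm_bound (H ^\<^sub>m k) c"
    using spectral_radius_jnf_norm_bound_less_1[OF H sr jordan_nf_exists[OF H cA]] by auto
  define Bz where "Bz = real n * (c * (\<Sum>j<n. cmod (z $ j)))\<^sup>2"
  define f where "f k = nsq ((H ^\<^sub>m k) *\<^sub>v z)" for k
  have fb: "f k \<le> Bz" for k
    unfolding f_def Bz_def by (rule norm_bound_vec[OF pow_carrier_mat[OF H] nb z])
  have step: "(H ^\<^sub>m Suc k) *\<^sub>v z = H *\<^sub>v ((H ^\<^sub>m k) *\<^sub>v z)" for k
  proof -
    have "H ^\<^sub>m Suc k = H * H ^\<^sub>m k" using pow_comm[OF H] by simp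
    then show ?thesis using H z by (simp add: assoc_mult_mat_vec[of _ n n _ n])
  qed
  have lc: "2 * t * f (Suc k) \<le> t\<^sup>2 * f k + f (Suc (Suc k))" for t k
  proof -
    have u: "(H ^\<^sub>m k) *\<^sub>v z \<in> carrier_vec n" using pow_carrier_mat[OF H, of k] z by (rule mult_mat_vec_carrier)
    have e1: "f (Suc k) = nsq (H *\<^sub>v ((H ^\<^sub>m k) *\<^sub>v z))" by (simp only: f_def step)
    have e2: "f (Suc (Suc k)) = nsq (H *\<^sub>v (H *\<^sub>v ((H ^\<^sub>m k) *\<^sub>v z)))" by (simp only: f_def step)
    show ?thesis using logconv[OF N u, of t] unfolding e1 e2 unfolding f_def H_def .
  qed
  have f0: "f 0 = nsq z" unfolding f_def using z H by simp
  have f1: "f 1 = nsq (H *\<^sub>v z)" using step[of 0] unfolding f_def using z by simp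
  have fnn: "f k \<ge> 0" for k unfolding f_def by (rule nsq_nonneg)
  show ?thesis
  proof (rule ccontr)
    assume "\<not> ?thesis"
    then have gt: "f 1 > f 0" using f0 f1 H_def by simp
    have "f 0 \<noteq> 0"
    proof
      assume "f 0 = 0"
      then have "z = 0\<^sub>v n" using f0 nsq_eq_0[OF z] by simp
      then have "f 1 = 0" using f1 H by (simp add: nsq_sum)
      then show False using gt \<open>f 0 = 0\<close> by simp
    qed
    then have f0p: "f 0 > 0" using fnn[of 0] by simp
    define q where "q = f 1 / f 0"
    have q1: "q > 1" using gt f0p q_def by simp
    have grow: "f (Suc k) \<ge> q * f k" for k
    proof (induct k)
      case 0 then show ?case using f0p q_def by simp
    next
      case (Suc k)
      have "2 * q * f (Suc k) \<le> q\<^sup>2 * f k + f (Suc (Suc k))" by (rule lc)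
      moreover have "q\<^sup>2 * f k \<le> q * f (Suc k)"
        using Suc q1 by (simp add: power2_eq_square mult.assoc mult_left_mono)
      ultimately show ?case by simp
    qed
    have pw: "f k \<ge> q ^ k * f 0" for k
    proof (induct k)
      case 0 then show ?case by simp
    next
      case (Suc k)
      have "q ^ Suc k * f 0 = q * (q ^ k * f 0)" by simp
      also have "\<dots> \<le> q * f k" using Suc q1 by (simp add: mult_left_mono)
      also have "\<dots> \<le> f (Suc k)" by (rule grow)
      finally show ?case .
    qed
    obtain k where "Bz / f 0 < q ^ k" using real_arch_pow[OF q1] by auto
    then have "Bz < q ^ k * f 0" using f0p by (simp add: divide_less_eq)
    then show False using pw[of k] fb[of k] by simp
  qed
qed



lemma cmat_smult_vec: assumes N: "N \<in> carrier_mat n n" and z: "z \<in> carrier_vec n"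
  shows "cmat (a \<cdot>\<^sub>m N) *\<^sub>v z = complex_of_real a \<cdot>\<^sub>v (cmat N *\<^sub>v z)"
proof (rule eq_vecI)
  fix i assume "i < dim_vec (complex_of_real a \<cdot>\<^sub>v (cmat N *\<^sub>v z))"
  then have i: "i < n" using N z by simp
  have aN: "a \<cdot>\<^sub>m N \<in> carrier_mat n n" using N by simp
  show "(cmat (a \<cdot>\<^sub>m N) *\<^sub>v z) $ i = (complex_of_real a \<cdot>\<^sub>v (cmat N *\<^sub>v z)) $ i"
    using cmat_index[OF aN z i] cmat_index[OF N z i] i N
    by (simp add: sum_distrib_left mult.assoc)
qed (use N z in simp)

lemma cmat_shift_vec: assumes N: "N \<in> carrier_mat n n" and z: "z \<in> carrier_vec n"
  shows "cmat (N - t \<cdot>\<^sub>m 1\<^sub>m n) *\<^sub>v z = cmat N *\<^sub>v z + (- complex_of_real t) \<cdot>\<^sub>v z"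
proof (rule eq_vecI)
  fix i assume "i < dim_vec (cmat N *\<^sub>v z + (- complex_of_real t) \<cdot>\<^sub>v z)"
  then have i: "i < n" using N z by simp
  have aN: "N - t \<cdot>\<^sub>m 1\<^sub>m n \<in> carrier_mat n n" by (rule minus_carrier_mat) simp
  have "(\<Sum>j<n. complex_of_real ((N - t \<cdot>\<^sub>m 1\<^sub>m n) $$ (i,j)) * z $ j)
      = (\<Sum>j<n. complex_of_real (N $$ (i,j)) * z $ j - (if j = i then complex_of_real t * z $ j else 0))"
    using N i by (intro sum.cong) (auto simp: algebra_simps)
  also have "\<dots> = (\<Sum>j<n. complex_of_real (N $$ (i,j)) * z $ j) - complex_of_real t * z $ i"
    using i by (simp add: sum_subtractf)
  finally show "(cmat (N - t \<cdot>\<^sub>m 1\<^sub>m n) *\<^sub>v z) $ i = (cmat N *\<^sub>v z + (- complex_of_real t) \<cdot>\<^sub>v z) $ i"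
    using cmat_index[OF aN z i] cmat_index[OF N z i] i N z by simp
qed (use N z in simp)

lemma symm_smult: assumes "symm n N" shows "symm n (a \<cdot>\<^sub>m N)"
proof -
  have N: "N \<in> carrier_mat n n" and t: "transpose_mat N = N" using assms unfolding symm_def by auto
  have "transpose_mat (a \<cdot>\<^sub>m N) = a \<cdot>\<^sub>m transpose_mat N" by (rule eq_matI) auto
  then show ?thesis using N t unfolding symm_def by simp
qed

lemma symm_shift: assumes "symm n N" shows "symm n (N - t \<cdot>\<^sub>m 1\<^sub>m n)"
proof -
  have N: "N \<in> carrier_mat n n" and t: "transpose_mat N = N" using assms unfolding symm_def by auto
  have "transpose_mat (N - t \<cdot>\<^sub>m 1\<^sub>m n) = transpose_mat N - t \<cdot>\<^sub>m 1\<^sub>m n"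
    using N by (intro eq_matI) auto
  then show ?thesis using N t unfolding symm_def by (simp add: minus_carrier_mat)
qed

lemma ev_smult: fixes N :: "real mat" assumes N: "N \<in> carrier_mat n n" and ev: "eigenvalue (a \<cdot>\<^sub>m N) l" and a: "a \<noteq> 0"
  shows "eigenvalue N (l / a)"
proof -
  obtain v where v: "v \<in> carrier_vec n" "v \<noteq> 0\<^sub>v n" "(a \<cdot>\<^sub>m N) *\<^sub>v v = l \<cdot>\<^sub>v v"
    using ev N unfolding eigenvalue_def eigenvector_def by auto
  have "N *\<^sub>v v = (l / a) \<cdot>\<^sub>v v"
  proof (rule eq_vecI)
    fix i assume "i < dim_vec ((l / a) \<cdot>\<^sub>v v)"
    then have i: "i < n" using v by simp
    have "((a \<cdot>\<^sub>m N) *\<^sub>v v) $ i = a * (N *\<^sub>v v) $ i"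
      using real_index[OF N v(1) i] real_index[OF smult_carrier_mat[OF N] v(1) i] i N
      by (auto simp: sum_distrib_left mult.assoc intro!: sum.cong)
    then have av: "a * (N *\<^sub>v v) $ i = l * v $ i" using v(3) i v(1) by simp
    have "(N *\<^sub>v v) $ i = (a * (N *\<^sub>v v) $ i) / a" using a by simp
    also have "\<dots> = l * v $ i / a" using av by simp
    finally have "(N *\<^sub>v v) $ i = l * v $ i / a" .
    then show "(N *\<^sub>v v) $ i = ((l / a) \<cdot>\<^sub>v v) $ i" using a i v(1) by simp
  qed (use N v in simp)
  then show ?thesis using v N unfolding eigenvalue_def eigenvector_def by auto
qed

lemma ev_shift: fixes N :: "real mat" assumes N: "N \<in> carrier_mat n n" and ev: "eigenvalue (N - t \<cdot>\<^sub>m 1\<^sub>m n) l"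
  shows "eigenvalue N (l + t)"
proof -
  have Nt: "N - t \<cdot>\<^sub>m 1\<^sub>m n \<in> carrier_mat n n" by (rule minus_carrier_mat) simp
  obtain v where v: "v \<in> carrier_vec n" "v \<noteq> 0\<^sub>v n" "(N - t \<cdot>\<^sub>m 1\<^sub>m n) *\<^sub>v v = l \<cdot>\<^sub>v v"
    using ev Nt unfolding eigenvalue_def eigenvector_def by auto
  have "N *\<^sub>v v = (l + t) \<cdot>\<^sub>v v"
  proof (rule eq_vecI)
    fix i assume "i < dim_vec ((l + t) \<cdot>\<^sub>v v)"
    then have i: "i < n" using v by simp
    have "((N - t \<cdot>\<^sub>m 1\<^sub>m n) *\<^sub>v v) $ i = (\<Sum>j<n. N $$ (i,j) * v $ j - (if j = i then t * v $ j else 0))"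
      unfolding real_index[OF Nt v(1) i] using N i by (intro sum.cong) (auto simp: algebra_simps)
    also have "\<dots> = (N *\<^sub>v v) $ i - t * v $ i" using i N v by (simp add: sum_subtractf real_index[OF N v(1) i])
    finally show "(N *\<^sub>v v) $ i = ((l + t) \<cdot>\<^sub>v v) $ i" using v(3) i v(1) by (simp add: algebra_simps)
  qed (use N v in simp)
  then show ?thesis using v N unfolding eigenvalue_def eigenvector_def by auto
qed

lemma G2: assumes N: "symm n N" and sp: "\<forall>l\<in>spectrum N. l\<^sup>2 \<le> r2" and r2: "r2 \<ge> 0"
  and z: "z \<in> carrier_vec n"
  shows "nsq (cmat N *\<^sub>v z) \<le> r2 * nsq z"
proof (rule ccontr)
  assume "\<not> ?thesis"
  then have gt: "nsq (cmat N *\<^sub>v z) > r2 * nsq z" by simp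
  have Nc: "N \<in> carrier_mat n n" using N unfolding symm_def by auto
  have nz: "nsq z > 0"
  proof -
    have "nsq z \<noteq> 0"
    proof
      assume "nsq z = 0"
      then have "z = 0\<^sub>v n" using nsq_eq_0[OF z] by simp
      then have "cmat N *\<^sub>v z = 0\<^sub>v n" using Nc by (intro eq_vecI) (auto simp: scalar_prod_def)
      then show False using gt \<open>nsq z = 0\<close> by (simp add: nsq_sum)
    qed
    then show ?thesis using nsq_nonneg[of z] by simp
  qed
  define s2 where "s2 = (r2 + nsq (cmat N *\<^sub>v z) / nsq z) / 2"
  have q: "nsq (cmat N *\<^sub>v z) / nsq z > r2" using gt nz by (simp add: less_divide_eq mult.commute)
  have s2a: "s2 > r2" "s2 * nsq z < nsq (cmat N *\<^sub>v z)"
    using q nz unfolding s2_def by (auto simp: field_simps)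
  define s where "s = sqrt s2"
  have s0: "s > 0" using s2a r2 s_def by simp
  have ss: "s\<^sup>2 = s2" using s2a r2 s_def by simp
  define N' where "N' = (1 / s) \<cdot>\<^sub>m N"
  have N': "symm n N'" unfolding N'_def by (rule symm_smult[OF N])
  have sp': "\<forall>l\<in>spectrum N'. \<bar>l\<bar> < 1"
  proof
    fix l assume "l \<in> spectrum N'"
    then have "eigenvalue ((1/s) \<cdot>\<^sub>m N) l" unfolding spectrum_def N'_def by simp
    then have "eigenvalue N (l / (1/s))" by (rule ev_smult[OF Nc]) (use s0 in simp)
    then have "(s * l)\<^sup>2 \<le> r2" using sp unfolding spectrum_def by (simp add: mult.commute)
    then have "s\<^sup>2 * l\<^sup>2 < s\<^sup>2 * 1" using ss s2a by (simp add: power_mult_distrib)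
    then have "l\<^sup>2 < 1" using s0 by (simp only: mult_less_cancel_left_pos zero_less_power)
    then show "\<bar>l\<bar> < 1" by (simp add: abs_square_less_1)
  qed
  have "nsq (cmat N' *\<^sub>v z) \<le> nsq z" by (rule G1[OF N' sp' z])
  moreover have "nsq (cmat N' *\<^sub>v z) = nsq (cmat N *\<^sub>v z) / s2"
  proof -
    have w: "cmat N *\<^sub>v z \<in> carrier_vec n" by (rule mult_mat_vec_carrier[OF cmat_carrier[OF Nc] z])
    have "nsq (cmat N' *\<^sub>v z) = (cmod (complex_of_real (1/s)))\<^sup>2 * nsq (cmat N *\<^sub>v z)"
      unfolding N'_def cmat_smult_vec[OF Nc z] nsq_smult[OF w] ..
    also have "cmod (complex_of_real (1/s)) = 1 / s" using s0 by (simp add: norm_divide)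
    also have "(1/s)\<^sup>2 = 1 / s2" using ss by (simp add: power_divide)
    finally show ?thesis by simp
  qed
  ultimately have "nsq (cmat N *\<^sub>v z) \<le> s2 * nsq z" using s2a r2
    by (simp add: divide_le_eq mult.commute)
  then show False using s2a by simp
qed



lemma quad_arith:
  fixes A B C0 t0 r2 Nn P R chi al c :: real
  assumes A: "A < 0" and t0: "t0 = - B / (2 * A)" and r2: "r2 = - (A * t0\<^sup>2 + B * t0 + C0) / A"
    and h: "P + t0\<^sup>2 * Nn - 2 * t0 * R \<le> r2 * Nn" and Nn: "Nn \<ge> 0"
    and AB: "A = (chi\<^sup>2 - 1) * c\<^sup>2" "B = 2 * chi\<^sup>2 * al * c" "C0 = (chi\<^sup>2 - 1) * al\<^sup>2"
  shows "al\<^sup>2 * Nn + c\<^sup>2 * P \<le> chi\<^sup>2 * (al\<^sup>2 * Nn + c\<^sup>2 * P + 2 * al * c * R)"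
proof -
  have Bt: "B = - 2 * A * t0" using A t0 by (simp add: field_simps)
  have Ar: "A * r2 = - (A * t0\<^sup>2 + B * t0 + C0)" using A r2 by (simp add: field_simps)
  have "A * (r2 * Nn) \<le> A * (P + t0\<^sup>2 * Nn - 2 * t0 * R)"
    using h A by (simp add: mult_left_mono_neg)
  then have "A * r2 * Nn - A * t0\<^sup>2 * Nn \<le> A * P + B * R" unfolding Bt by (simp add: algebra_simps)
  then have "0 \<le> A * P + B * R + C0 * Nn" unfolding Ar Bt by (simp add: algebra_simps power2_eq_square)
  also have "A * P + B * R + C0 * Nn = chi\<^sup>2 * (al\<^sup>2 * Nn + c\<^sup>2 * P + 2 * al * c * R) - (al\<^sup>2 * Nn + c\<^sup>2 * P)"
    unfolding AB by (simp add: algebra_simps)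
  finally show ?thesis by simp
qed

lemma Q: assumes N: "symm n N" and fin: "finite (spectrum N)" and ne: "spectrum N \<noteq> {}"
  and pos: "\<forall>x\<in>spectrum N. x > 0" and al: "al > 0" and c: "c > 0" and z: "z \<in> carrier_vec n"
  shows "al\<^sup>2 * nsq z + c\<^sup>2 * nsq (cmat N *\<^sub>v z)
     \<le> (Max (gf c al ` spectrum N))\<^sup>2 * nsq (complex_of_real al \<cdot>\<^sub>v z + complex_of_real c \<cdot>\<^sub>v (cmat N *\<^sub>v z))"
proof -
  define S where "S = spectrum N"
  define chi where "chi = Max (gf c al ` S)"
  have Nc: "N \<in> carrier_mat n n" using N unfolding symm_def by auto
  have chiin: "chi \<in> gf c al ` S" unfolding chi_def S_def using fin ne by simp
  have chige: "gf c al l \<le> chi" if "l \<in> S" for l unfolding chi_def using fin that S_def by simp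
  have chi1: "chi < 1" using chiin gf_le_1 al c pos S_def by auto
  have chi0: "chi \<ge> 0" using chiin gf_nonneg al c pos S_def by auto
  define A where "A = (chi\<^sup>2 - 1) * c\<^sup>2"
  define B where "B = 2 * chi\<^sup>2 * al * c"
  define C0 where "C0 = (chi\<^sup>2 - 1) * al\<^sup>2"
  define t0 where "t0 = - B / (2 * A)"
  define r2 where "r2 = - (A * t0\<^sup>2 + B * t0 + C0) / A"
  have chi2: "chi\<^sup>2 < 1" using chi0 chi1 by (simp add: abs_square_less_1)
  have A0: "A < 0" unfolding A_def using chi2 c by (simp add: mult_neg_pos)
  have inS: "(l - t0)\<^sup>2 \<le> r2" if l: "l \<in> S" for l
  proof -
    have lp: "l > 0" using l pos S_def by auto
    have "(gf c al l)\<^sup>2 \<le> chi\<^sup>2" using chige[OF l] gf_nonneg[OF al c lp] by (simp add: power_mono)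
    then have "(al\<^sup>2 + c\<^sup>2 * l\<^sup>2) / (al + c * l)\<^sup>2 \<le> chi\<^sup>2" using gf_sq[OF al c lp] by simp
    moreover have "(al + c * l)\<^sup>2 > 0"
    proof -
      have "al + c * l > 0" using al c lp by (simp add: add_pos_pos)
      then show ?thesis by simp
    qed
    ultimately have "al\<^sup>2 + c\<^sup>2 * l\<^sup>2 \<le> chi\<^sup>2 * (al + c * l)\<^sup>2" by (simp add: divide_le_eq)
    then have q: "A * l\<^sup>2 + B * l + C0 \<ge> 0"
      unfolding A_def B_def C0_def by (simp add: power2_eq_square algebra_simps)
    have "A * ((l - t0)\<^sup>2 - r2) = A * l\<^sup>2 + B * l + C0"
      using A0 unfolding r2_def t0_def by (simp add: field_simps power2_eq_square)
    then have "A * ((l - t0)\<^sup>2 - r2) \<ge> 0" using q by simp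
    then have "(l - t0)\<^sup>2 - r2 \<le> 0" using A0 by (simp add: zero_le_mult_iff)
    then show ?thesis by simp
  qed
  obtain l0 where "l0 \<in> S" using ne S_def by auto
  then have r20: "r2 \<ge> 0" using inS[of l0] by (meson order_trans zero_le_power2)
  define N' where "N' = N - t0 \<cdot>\<^sub>m 1\<^sub>m n"
  have N': "symm n N'" unfolding N'_def by (rule symm_shift[OF N])
  have sp': "\<forall>l\<in>spectrum N'. l\<^sup>2 \<le> r2"
  proof
    fix l assume "l \<in> spectrum N'"
    then have "eigenvalue N (l + t0)" using ev_shift[OF Nc] unfolding spectrum_def N'_def by simp
    then have "((l + t0) - t0)\<^sup>2 \<le> r2" using inS unfolding S_def spectrum_def by blast
    then show "l\<^sup>2 \<le> r2" by simp
  qed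
  define w where "w = cmat N *\<^sub>v z"
  have w: "w \<in> carrier_vec n" unfolding w_def by (rule mult_mat_vec_carrier[OF cmat_carrier[OF Nc] z])
  define R where "R = Re (w \<bullet>c z)"
  have "nsq (cmat N' *\<^sub>v z) \<le> r2 * nsq z" by (rule G2[OF N' sp' r20 z])
  moreover have "nsq (cmat N' *\<^sub>v z) = nsq w + t0\<^sup>2 * nsq z - 2 * t0 * R"
    unfolding N'_def cmat_shift_vec[OF Nc z] w_def[symmetric] R_def
    using w z by (simp add: nsq_add[of _ n] nsq_smult[of _ n] ip_smult_right[of _ n])
  ultimately have h: "nsq w + t0\<^sup>2 * nsq z - 2 * t0 * R \<le> r2 * nsq z" by simp
  have e2: "nsq (complex_of_real al \<cdot>\<^sub>v z + complex_of_real c \<cdot>\<^sub>v w) = al\<^sup>2 * nsq z + c\<^sup>2 * nsq w + 2 * al * c * R"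
  proof -
    have "Re (z \<bullet>c w) = R" unfolding R_def using ip_sym[OF w z] by simp
    then show ?thesis using w z
      by (simp add: nsq_add[of _ n] nsq_smult[of _ n] ip_smult_right[of _ n] ip_smult_left[of _ n])
  qed
  have "al\<^sup>2 * nsq z + c\<^sup>2 * nsq w \<le> chi\<^sup>2 * (al\<^sup>2 * nsq z + c\<^sup>2 * nsq w + 2 * al * c * R)"
    by (rule quad_arith[OF A0 t0_def r2_def h nsq_nonneg A_def B_def C0_def])
  then show ?thesis unfolding e2[unfolded w_def] unfolding w_def chi_def S_def .
qed



lemma smat_vec: "A \<in> carrier_mat nr nc \<Longrightarrow> v \<in> carrier_vec nc \<Longrightarrow> (k \<cdot>\<^sub>m A) *\<^sub>v v = k \<cdot>\<^sub>v (A *\<^sub>v v)"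
  by (intro eq_vecI) (auto simp: scalar_prod_def sum_distrib_left mult.assoc)

lemma one_smult_vec: fixes c :: complex shows "v \<in> carrier_vec n \<Longrightarrow> (c \<cdot>\<^sub>m 1\<^sub>m n) *\<^sub>v v = c \<cdot>\<^sub>v v"
  by (simp add: smat_vec[of _ n n] one_mult_mat_vec)

lemma smult_append: "k \<cdot>\<^sub>v (x @\<^sub>v y) = (k \<cdot>\<^sub>v x) @\<^sub>v (k \<cdot>\<^sub>v y)"
  by (intro eq_vecI) auto

lemma add_append: "x \<in> carrier_vec n \<Longrightarrow> x' \<in> carrier_vec n \<Longrightarrow> y \<in> carrier_vec m \<Longrightarrow> y' \<in> carrier_vec m \<Longrightarrow>
  (x @\<^sub>v y) + (x' @\<^sub>v y') = (x + x') @\<^sub>v (y + y')"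
  by (rule append_vec_add)

lemma conj_append: "conjugate (x @\<^sub>v y) = conjugate x @\<^sub>v conjugate y"
  by (intro eq_vecI) auto

lemma ip_append: "x \<in> carrier_vec n \<Longrightarrow> x' \<in> carrier_vec n \<Longrightarrow> y \<in> carrier_vec m \<Longrightarrow> y' \<in> carrier_vec m \<Longrightarrow>
  (x @\<^sub>v y) \<bullet>c (x' @\<^sub>v y') = x \<bullet>c x' + y \<bullet>c y'"
  unfolding conj_append by (rule scalar_prod_append) auto

lemma nsq_append: "x \<in> carrier_vec n \<Longrightarrow> y \<in> carrier_vec m \<Longrightarrow> nsq (x @\<^sub>v y) = nsq x + nsq y"
  unfolding nsq_def by (simp add: ip_append)

lemma Rmat_vec:
  fixes \<nu> \<theta> \<omega> :: real and k a b :: complex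
  defines "k \<equiv> complex_of_real (1 / sqrt (\<nu> * \<theta>))" and "a \<equiv> - \<i> * complex_of_real (\<omega> * \<nu>)"
    and "b \<equiv> complex_of_real (sqrt \<nu>)"
  assumes u1: "u1 \<in> carrier_vec m" and u2: "u2 \<in> carrier_vec m"
  shows "Rmat m \<nu> \<omega> \<theta> *\<^sub>v (u1 @\<^sub>v u2) =
    ((k * a) \<cdot>\<^sub>v u1 + (k * b) \<cdot>\<^sub>v u2) @\<^sub>v ((- (k * b)) \<cdot>\<^sub>v u1 + (- (k * a)) \<cdot>\<^sub>v u2)"
proof -
  have c: "(x \<cdot>\<^sub>m 1\<^sub>m m) \<in> carrier_mat m m" for x :: complex by simp
  have F: "four_block_mat ((- \<i> * complex_of_real (\<omega> * \<nu>)) \<cdot>\<^sub>m 1\<^sub>m m) (complex_of_real (sqrt \<nu>) \<cdot>\<^sub>m 1\<^sub>m m)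
                    ((- complex_of_real (sqrt \<nu>)) \<cdot>\<^sub>m 1\<^sub>m m) ((\<i> * complex_of_real (\<omega> * \<nu>)) \<cdot>\<^sub>m 1\<^sub>m m) *\<^sub>v (u1 @\<^sub>v u2)
    = (a \<cdot>\<^sub>v u1 + b \<cdot>\<^sub>v u2) @\<^sub>v ((- b) \<cdot>\<^sub>v u1 + (- a) \<cdot>\<^sub>v u2)"
    unfolding four_block_mat_mult_vec[OF c c c c u1 u2] using u1 u2
    by (simp add: one_smult_vec a_def b_def)
  have car: "four_block_mat ((- \<i> * complex_of_real (\<omega> * \<nu>)) \<cdot>\<^sub>m 1\<^sub>m m) (complex_of_real (sqrt \<nu>) \<cdot>\<^sub>m 1\<^sub>m m)
                    ((- complex_of_real (sqrt \<nu>)) \<cdot>\<^sub>m 1\<^sub>m m) ((\<i> * complex_of_real (\<omega> * \<nu>)) \<cdot>\<^sub>m 1\<^sub>m m) \<in> carrier_mat (m+m) (m+m)"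
    by (rule four_block_carrier_mat) simp_all
  show ?thesis unfolding Rmat_def k_def[symmetric] smat_vec[OF car append_carrier_vec[OF u1 u2]] F smult_append
    using u1 u2 by (simp add: smult_add_distrib_vec smult_smult_assoc)
qed

lemma zero_mat_vec: "u \<in> carrier_vec n \<Longrightarrow> (0\<^sub>m m n :: 'a :: comm_ring_1 mat) *\<^sub>v u = 0\<^sub>v m"
  by (intro eq_vecI) (auto simp: scalar_prod_def)

lemma blockdiag_vec: assumes X: "X \<in> carrier_mat m m" and u1: "u1 \<in> carrier_vec m" and u2: "u2 \<in> carrier_vec m"
  shows "blockdiag m X *\<^sub>v (u1 @\<^sub>v u2) = (X *\<^sub>v u1) @\<^sub>v (X *\<^sub>v u2)"
  unfolding blockdiag_def four_block_mat_mult_vec[OF X zero_carrier_mat zero_carrier_mat X u1 u2]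
  using X u1 u2 by (simp add: zero_mat_vec[of _ m])

lemma blockdiag_carrier: "X \<in> carrier_mat m m \<Longrightarrow> blockdiag m X \<in> carrier_mat (m+m) (m+m)"
  unfolding blockdiag_def by simp

lemma Rmat_carrier: "Rmat m \<nu> \<omega> \<theta> \<in> carrier_mat (m+m) (m+m)"
  unfolding Rmat_def by simp

lemma split_vec: "u \<in> carrier_vec (m+m) \<Longrightarrow> \<exists>u1 u2. u1 \<in> carrier_vec m \<and> u2 \<in> carrier_vec m \<and> u = u1 @\<^sub>v u2"
  by (metis vec_first_carrier vec_last_carrier vec_first_last_append)

lemma rot_nsq: fixes P Q :: complex
  assumes P: "cnj P = - P" and Q: "cnj Q = Q" and PQ: "(cmod P)\<^sup>2 + (cmod Q)\<^sup>2 = 1"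
    and u1: "u1 \<in> carrier_vec m" and u2: "u2 \<in> carrier_vec m"
  shows "nsq ((P \<cdot>\<^sub>v u1 + Q \<cdot>\<^sub>v u2) @\<^sub>v ((- Q) \<cdot>\<^sub>v u1 + (- P) \<cdot>\<^sub>v u2)) = nsq u1 + nsq u2"
proof -
  define x where "x = u1 \<bullet>c u2"
  have "nsq ((P \<cdot>\<^sub>v u1 + Q \<cdot>\<^sub>v u2) @\<^sub>v ((- Q) \<cdot>\<^sub>v u1 + (- P) \<cdot>\<^sub>v u2))
     = ((cmod P)\<^sup>2 + (cmod Q)\<^sup>2) * nsq u1 + ((cmod P)\<^sup>2 + (cmod Q)\<^sup>2) * nsq u2
       + 2 * Re (P * cnj Q * x) + 2 * Re (Q * cnj P * x)"
    using u1 u2 unfolding x_def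
    by (simp add: nsq_append[of _ m _ m] nsq_add[of _ m] nsq_smult[of _ m] ip_smult_left[of _ m]
        ip_smult_right[of _ m] algebra_simps)
  moreover have "2 * Re (P * cnj Q * x) + 2 * Re (Q * cnj P * x) = 0" using P Q by (simp add: algebra_simps)
  ultimately show ?thesis using PQ by (simp add: algebra_simps)
qed

context
  fixes \<nu> \<omega> \<theta> :: real and m :: nat
  assumes nu: "\<nu> > 0" and th: "\<theta> = 1 + \<nu> * \<omega>\<^sup>2"
begin

private abbreviation "kk \<equiv> complex_of_real (1 / sqrt (\<nu> * \<theta>))"
private abbreviation "aa \<equiv> - \<i> * complex_of_real (\<omega> * \<nu>)"
private abbreviation "bb \<equiv> complex_of_real (sqrt \<nu>)"

lemma cnj_ka: "cnj (kk * aa) = - (kk * aa)" by simp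
lemma cnj_kb: "cnj (kk * bb) = kk * bb" by simp

lemma R_skew: assumes u: "u \<in> carrier_vec (m+m)" and w: "w \<in> carrier_vec (m+m)"
  shows "(Rmat m \<nu> \<omega> \<theta> *\<^sub>v u) \<bullet>c w = - (u \<bullet>c (Rmat m \<nu> \<omega> \<theta> *\<^sub>v w))"
proof -
  obtain u1 u2 where U: "u1 \<in> carrier_vec m" "u2 \<in> carrier_vec m" "u = u1 @\<^sub>v u2" using split_vec[OF u] by blast
  obtain w1 w2 where W: "w1 \<in> carrier_vec m" "w2 \<in> carrier_vec m" "w = w1 @\<^sub>v w2" using split_vec[OF w] by blast
  show ?thesis unfolding U(3) W(3) Rmat_vec[OF U(1,2)] Rmat_vec[OF W(1,2)]
    using U W
    by (simp add: ip_append[of _ m _ _ m] ip_add_left[of _ m] ip_add_right[of _ m]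
        ip_smult_left[of _ m] ip_smult_right[of _ m] ip_sym[of u2 m w1] ip_sym[of u1 m w2] algebra_simps)
qed

lemma ab_norm: "(cmod (kk * aa))\<^sup>2 + (cmod (kk * bb))\<^sup>2 = 1"
proof -
  have nt: "\<nu> * \<theta> > 0" using nu th by (simp add: add_pos_nonneg)
  have k: "cmod kk = 1 / sqrt (\<nu> * \<theta>)" using nt by (subst norm_of_real) simp
  have a: "cmod aa = \<bar>\<omega> * \<nu>\<bar>" by (simp add: norm_mult abs_mult)
  have b: "cmod bb = sqrt \<nu>" using nu by simp
  have ea: "(cmod (kk * aa))\<^sup>2 = (\<omega> * \<nu>)\<^sup>2 / (\<nu> * \<theta>)"
    unfolding norm_mult[of kk aa] k a using nt by (simp add: power_mult_distrib power_divide)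
  have eb: "(cmod (kk * bb))\<^sup>2 = \<nu> / (\<nu> * \<theta>)"
    unfolding norm_mult[of kk bb] k b using nt nu by (simp add: power_mult_distrib power_divide)
  have "(\<omega> * \<nu>)\<^sup>2 / (\<nu> * \<theta>) + \<nu> / (\<nu> * \<theta>) = 1"
  proof -
    have "(\<omega> * \<nu>)\<^sup>2 + \<nu> = \<nu> * \<theta>" unfolding th by (simp add: algebra_simps power2_eq_square)
    then have "(\<omega> * \<nu>)\<^sup>2 / (\<nu> * \<theta>) + \<nu> / (\<nu> * \<theta>) = (\<nu> * \<theta>) / (\<nu> * \<theta>)"
      by (simp only: add_divide_distrib[symmetric])
    moreover have "\<nu> \<noteq> 0" "\<theta> \<noteq> 0" using nt by auto
    ultimately show ?thesis by simp
  qed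
  then show ?thesis unfolding ea eb .
qed

lemma R_nsq: assumes u: "u \<in> carrier_vec (m+m)"
  shows "nsq (Rmat m \<nu> \<omega> \<theta> *\<^sub>v u) = nsq u"
proof -
  obtain u1 u2 where U: "u1 \<in> carrier_vec m" "u2 \<in> carrier_vec m" "u = u1 @\<^sub>v u2" using split_vec[OF u] by blast
  show ?thesis unfolding U(3) Rmat_vec[OF U(1,2)]
    using rot_nsq[OF cnj_ka cnj_kb ab_norm U(1,2)] nsq_append[OF U(1,2)] by simp
qed

lemma R_comm: assumes X: "X \<in> carrier_mat m m" and u: "u \<in> carrier_vec (m+m)"
  shows "Rmat m \<nu> \<omega> \<theta> *\<^sub>v (blockdiag m X *\<^sub>v u) = blockdiag m X *\<^sub>v (Rmat m \<nu> \<omega> \<theta> *\<^sub>v u)"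
proof -
  obtain u1 u2 where U: "u1 \<in> carrier_vec m" "u2 \<in> carrier_vec m" "u = u1 @\<^sub>v u2" using split_vec[OF u] by blast
  have c1: "X *\<^sub>v u1 \<in> carrier_vec m" "X *\<^sub>v u2 \<in> carrier_vec m" using X U by auto
  have c2: "(kk * aa) \<cdot>\<^sub>v u1 + (kk * bb) \<cdot>\<^sub>v u2 \<in> carrier_vec m"
     "(- (kk * bb)) \<cdot>\<^sub>v u1 + (- (kk * aa)) \<cdot>\<^sub>v u2 \<in> carrier_vec m" using U by auto
  show ?thesis unfolding U(3) Rmat_vec[OF U(1,2)] blockdiag_vec[OF X U(1,2)] Rmat_vec[OF c1]
    blockdiag_vec[OF X c2] using X U
    by (simp add: mult_add_distrib_mat_vec[of _ m m] mult_mat_vec[of _ m m])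
qed

end



lemma BN: assumes H: "H \<in> carrier_mat n n"
  and herm: "\<And>u w. u \<in> carrier_vec n \<Longrightarrow> w \<in> carrier_vec n \<Longrightarrow> (H *\<^sub>v u) \<bullet>c w = u \<bullet>c (H *\<^sub>v w)"
  and R: "R \<in> carrier_mat n n"
  and skew: "\<And>u w. u \<in> carrier_vec n \<Longrightarrow> w \<in> carrier_vec n \<Longrightarrow> (R *\<^sub>v u) \<bullet>c w = - (u \<bullet>c (R *\<^sub>v w))"
  and rn: "\<And>u. u \<in> carrier_vec n \<Longrightarrow> nsq (R *\<^sub>v u) = nsq u"
  and comm: "\<And>u. u \<in> carrier_vec n \<Longrightarrow> R *\<^sub>v (H *\<^sub>v u) = H *\<^sub>v (R *\<^sub>v u)"
  and y: "y \<in> carrier_vec n"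
  shows "nsq (complex_of_real al \<cdot>\<^sub>v y + complex_of_real t \<cdot>\<^sub>v (R *\<^sub>v (H *\<^sub>v y))) = al\<^sup>2 * nsq y + t\<^sup>2 * nsq (H *\<^sub>v y)"
proof -
  have hy: "H *\<^sub>v y \<in> carrier_vec n" using H y by simp
  have ry: "R *\<^sub>v y \<in> carrier_vec n" using R y by simp
  have rhy: "R *\<^sub>v (H *\<^sub>v y) \<in> carrier_vec n" using R hy by simp
  define x where "x = y \<bullet>c (R *\<^sub>v (H *\<^sub>v y))"
  have "x = - ((R *\<^sub>v y) \<bullet>c (H *\<^sub>v y))" unfolding x_def using skew[OF y hy] by simp
  also have "(R *\<^sub>v y) \<bullet>c (H *\<^sub>v y) = (H *\<^sub>v (R *\<^sub>v y)) \<bullet>c y" using herm[OF ry y] by simp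
  also have "\<dots> = (R *\<^sub>v (H *\<^sub>v y)) \<bullet>c y" using comm[OF y] by simp
  also have "\<dots> = cnj x" unfolding x_def by (rule ip_sym[OF y rhy])
  finally have "x = - cnj x" .
  then have "Re x = - Re x" by (metis cnj.simps(1) uminus_complex.simps(1))
  then have Rx: "Re x = 0" by simp
  have c1: "complex_of_real al \<cdot>\<^sub>v y \<in> carrier_vec n" using y by simp
  have c2: "complex_of_real t \<cdot>\<^sub>v (R *\<^sub>v (H *\<^sub>v y)) \<in> carrier_vec n" using rhy by simp
  have i: "(complex_of_real al \<cdot>\<^sub>v y) \<bullet>c (complex_of_real t \<cdot>\<^sub>v (R *\<^sub>v (H *\<^sub>v y))) = complex_of_real (al * t) * x"
    unfolding ip_smult_left[OF y c2] ip_smult_right[OF y rhy] x_def by simp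
  have "nsq (complex_of_real al \<cdot>\<^sub>v y + complex_of_real t \<cdot>\<^sub>v (R *\<^sub>v (H *\<^sub>v y)))
    = nsq (complex_of_real al \<cdot>\<^sub>v y) + nsq (complex_of_real t \<cdot>\<^sub>v (R *\<^sub>v (H *\<^sub>v y))) + 2 * Re (complex_of_real (al * t) * x)"
    unfolding nsq_add[OF c1 c2] i ..
  also have "\<dots> = al\<^sup>2 * nsq y + t\<^sup>2 * nsq (H *\<^sub>v y)"
    unfolding nsq_smult[OF y] nsq_smult[OF rhy] rn[OF hy] using Rx by simp
  finally show ?thesis .
qed


lemma minv_props: assumes A: "A \<in> carrier_mat n n"
  and inj: "\<And>v. v \<in> carrier_vec n \<Longrightarrow> A *\<^sub>v v = 0\<^sub>v n \<Longrightarrow> v = 0\<^sub>v n"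
  shows "A * minv A = 1\<^sub>m n" "minv A * A = 1\<^sub>m n" "minv A \<in> carrier_mat n n"
proof -
  have "det A \<noteq> 0" using det_0_iff_vec_prod_zero[OF A] inj by auto
  from det_non_zero_imp_unit[OF A this, of "()"]
  have U: "A \<in> Units (ring_mat TYPE(complex) n ())" .
  have "mat_inverse A \<noteq> None" using mat_inverse(1)[OF A, of "()"] U by auto
  then obtain B where B: "mat_inverse A = Some B" by auto
  have mB: "minv A = B" unfolding minv_def B by simp
  show "A * minv A = 1\<^sub>m n" "minv A * A = 1\<^sub>m n" "minv A \<in> carrier_mat n n"
    using mat_inverse(2)[OF A B] unfolding mB by auto
qed

lemma blockdiag_cmat: assumes N: "N \<in> carrier_mat m m"
  shows "blockdiag m (cmat N) = cmat (four_block_mat N (0\<^sub>m m m) (0\<^sub>m m m) N)"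
  unfolding blockdiag_def using N by (intro eq_matI) auto

lemma symm_block: assumes "symm m N" shows "symm (m+m) (four_block_mat N (0\<^sub>m m m) (0\<^sub>m m m) N)"
proof -
  have N: "N \<in> carrier_mat m m" and t: "transpose_mat N = N" using assms unfolding symm_def by auto
  have "transpose_mat (four_block_mat N (0\<^sub>m m m) (0\<^sub>m m m) N) = four_block_mat N (0\<^sub>m m m) (0\<^sub>m m m) N"
    using N symm_entry[OF assms] by (intro eq_matI) auto
  then show ?thesis using N unfolding symm_def by simp
qed



lemma BNR: assumes nu: "\<nu> > 0" and th: "\<theta> = 1 + \<nu> * \<omega>\<^sup>2" and N: "symm m N"
  and y: "y \<in> carrier_vec (m+m)"
  shows "nsq (complex_of_real al \<cdot>\<^sub>v y + complex_of_real t \<cdot>\<^sub>v (Rmat m \<nu> \<omega> \<theta> *\<^sub>v (blockdiag m (cmat N) *\<^sub>v y)))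
     = al\<^sup>2 * nsq y + t\<^sup>2 * nsq (blockdiag m (cmat N) *\<^sub>v y)"
proof -
  have Nc: "N \<in> carrier_mat m m" using N unfolding symm_def by auto
  have X: "cmat N \<in> carrier_mat m m" using Nc by simp
  note bd = blockdiag_cmat[OF Nc]
  show ?thesis
  proof (rule BN[OF blockdiag_carrier[OF X] _ Rmat_carrier])
    fix u w :: "complex vec" assume "u \<in> carrier_vec (m+m)" "w \<in> carrier_vec (m+m)"
    then show "(blockdiag m (cmat N) *\<^sub>v u) \<bullet>c w = u \<bullet>c (blockdiag m (cmat N) *\<^sub>v w)"
      unfolding bd by (rule herm_ip[OF symm_block[OF N]])
  next
    fix u w :: "complex vec" assume "u \<in> carrier_vec (m+m)" "w \<in> carrier_vec (m+m)"
    then show "(Rmat m \<nu> \<omega> \<theta> *\<^sub>v u) \<bullet>c w = - (u \<bullet>c (Rmat m \<nu> \<omega> \<theta> *\<^sub>v w))"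
      by (rule R_skew[OF nu th])
  next
    fix u :: "complex vec" assume "u \<in> carrier_vec (m+m)"
    then show "nsq (Rmat m \<nu> \<omega> \<theta> *\<^sub>v u) = nsq u" by (rule R_nsq[OF nu th])
  next
    fix u :: "complex vec" assume "u \<in> carrier_vec (m+m)"
    then show "Rmat m \<nu> \<omega> \<theta> *\<^sub>v (blockdiag m (cmat N) *\<^sub>v u) = blockdiag m (cmat N) *\<^sub>v (Rmat m \<nu> \<omega> \<theta> *\<^sub>v u)"
      by (rule R_comm[OF nu th X])
  qed (rule y)
qed

lemma NI: assumes N: "symm m N" and fin: "finite (spectrum N)" and ne: "spectrum N \<noteq> {}"
  and pos: "\<forall>x\<in>spectrum N. x > 0" and al: "al > 0" and c: "c > 0" and y: "y \<in> carrier_vec (m+m)"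
  shows "al\<^sup>2 * nsq y + c\<^sup>2 * nsq (blockdiag m (cmat N) *\<^sub>v y)
     \<le> (Max (gf c al ` spectrum N))\<^sup>2 * nsq (complex_of_real al \<cdot>\<^sub>v y + complex_of_real c \<cdot>\<^sub>v (blockdiag m (cmat N) *\<^sub>v y))"
proof -
  have Nc: "N \<in> carrier_mat m m" using N unfolding symm_def by auto
  have X: "cmat N \<in> carrier_mat m m" using Nc by simp
  obtain y1 y2 where Y: "y1 \<in> carrier_vec m" "y2 \<in> carrier_vec m" "y = y1 @\<^sub>v y2" using split_vec[OF y] by blast
  define chi where "chi = Max (gf c al ` spectrum N)"
  have q1: "al\<^sup>2 * nsq y1 + c\<^sup>2 * nsq (cmat N *\<^sub>v y1)
     \<le> chi\<^sup>2 * nsq (complex_of_real al \<cdot>\<^sub>v y1 + complex_of_real c \<cdot>\<^sub>v (cmat N *\<^sub>v y1))"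
    unfolding chi_def by (rule Q[OF N fin ne pos al c Y(1)])
  have q2: "al\<^sup>2 * nsq y2 + c\<^sup>2 * nsq (cmat N *\<^sub>v y2)
     \<le> chi\<^sup>2 * nsq (complex_of_real al \<cdot>\<^sub>v y2 + complex_of_real c \<cdot>\<^sub>v (cmat N *\<^sub>v y2))"
    unfolding chi_def by (rule Q[OF N fin ne pos al c Y(2)])
  have xc: "cmat N *\<^sub>v y1 \<in> carrier_vec m" "cmat N *\<^sub>v y2 \<in> carrier_vec m" using X Y by auto
  have e1: "blockdiag m (cmat N) *\<^sub>v y = (cmat N *\<^sub>v y1) @\<^sub>v (cmat N *\<^sub>v y2)"
    unfolding Y(3) by (rule blockdiag_vec[OF X Y(1,2)])
  have e2: "complex_of_real al \<cdot>\<^sub>v y + complex_of_real c \<cdot>\<^sub>v (blockdiag m (cmat N) *\<^sub>v y)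
     = (complex_of_real al \<cdot>\<^sub>v y1 + complex_of_real c \<cdot>\<^sub>v (cmat N *\<^sub>v y1)) @\<^sub>v
       (complex_of_real al \<cdot>\<^sub>v y2 + complex_of_real c \<cdot>\<^sub>v (cmat N *\<^sub>v y2))"
    unfolding e1 unfolding Y(3) smult_append using Y xc by (simp add: add_append[of _ m _ _ m])
  have "al\<^sup>2 * nsq y + c\<^sup>2 * nsq (blockdiag m (cmat N) *\<^sub>v y)
    = (al\<^sup>2 * nsq y1 + c\<^sup>2 * nsq (cmat N *\<^sub>v y1)) + (al\<^sup>2 * nsq y2 + c\<^sup>2 * nsq (cmat N *\<^sub>v y2))"
    unfolding e1 unfolding Y(3) nsq_append[OF Y(1,2)] nsq_append[OF xc] by (simp add: algebra_simps)
  also have "\<dots> \<le> chi\<^sup>2 * nsq (complex_of_real al \<cdot>\<^sub>v y1 + complex_of_real c \<cdot>\<^sub>v (cmat N *\<^sub>v y1))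
     + chi\<^sup>2 * nsq (complex_of_real al \<cdot>\<^sub>v y2 + complex_of_real c \<cdot>\<^sub>v (cmat N *\<^sub>v y2))"
    using q1 q2 by simp
  also have "\<dots> = chi\<^sup>2 * nsq (complex_of_real al \<cdot>\<^sub>v y + complex_of_real c \<cdot>\<^sub>v (blockdiag m (cmat N) *\<^sub>v y))"
    unfolding e2 using Y xc by (simp add: nsq_append[of _ m _ m] algebra_simps)
  finally show ?thesis unfolding chi_def .
qed



lemma spec_facts: assumes spd: "spd_mat m M" and m: "m > 0"
  shows "symm m M" "finite (spectrum M)" "spectrum M \<noteq> {}" "\<forall>x\<in>spectrum M. x > 0"
proof -
  have Mc: "M \<in> carrier_mat m m" and t: "transpose_mat M = M"
    and pd: "\<And>v. v \<in> carrier_vec m \<Longrightarrow> v \<noteq> 0\<^sub>v m \<Longrightarrow> scalar_prod v (M *\<^sub>v v) > 0"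
    using spd unfolding spd_mat_def by auto
  show S: "symm m M" unfolding symm_def using Mc t by simp
  show "finite (spectrum M)" by (rule card_finite_spectrum(1)[OF Mc])
  have "spectrum (cmat M) \<noteq> {}" by (rule spectrum_non_empty[OF cmat_carrier[OF Mc] m])
  then obtain k where "eigenvalue (cmat M) k" unfolding spectrum_def by auto
  from eig_real(2)[OF S this] show "spectrum M \<noteq> {}" unfolding spectrum_def by auto
  show "\<forall>x\<in>spectrum M. x > 0"
  proof
    fix l assume "l \<in> spectrum M"
    then obtain v where v: "v \<in> carrier_vec m" "v \<noteq> 0\<^sub>v m" "M *\<^sub>v v = l \<cdot>\<^sub>v v"
      using Mc unfolding spectrum_def eigenvalue_def eigenvector_def by auto
    have "scalar_prod v (M *\<^sub>v v) = l * scalar_prod v v"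
      unfolding v(3) using v(1) by (simp add: scalar_prod_smult_distrib[of _ m])
    then have gt: "l * scalar_prod v v > 0" using pd[OF v(1,2)] by simp
    have "scalar_prod v v \<ge> 0" using conjugate_square_ge_0_vec[of v] by simp
    then show "l > 0" using gt by (simp add: zero_less_mult_iff)
  qed
qed

lemma chi_bounds: assumes S: "finite S" "S \<noteq> {}" "\<forall>x\<in>S. x > 0" and al: "al > 0" and c: "c > 0"
  shows "0 \<le> Max (gf c al ` S)" "Max (gf c al ` S) \<le> 1"
proof -
  have "Max (gf c al ` S) \<in> gf c al ` S" using S by simp
  then obtain x where x: "x \<in> S" "Max (gf c al ` S) = gf c al x" by auto
  show "0 \<le> Max (gf c al ` S)" using x gf_nonneg[OF al c] S by simp
  show "Max (gf c al ` S) \<le> 1" using x gf_le_1[OF al c] S by (simp add: less_imp_le)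
qed



lemma part3:
  fixes M K :: "real mat"
  assumes m: "m > 0" and spM: "spd_mat m M" and spK: "spd_mat m K" and nu: "\<nu> > 0"
    and th: "\<theta> = 1 + \<nu> * \<omega>\<^sup>2" and al: "\<alpha> > 0"
  shows "spectral_radius (MBAS m M K \<nu> \<omega> \<alpha>) \<le> Max (gf \<theta> \<alpha> ` spectrum M)
       \<and> spectral_radius (MBAS m M K \<nu> \<omega> \<alpha>) \<le> Max (gf (sqrt (\<nu> * \<theta>)) \<alpha> ` spectrum K)"
proof -
  note FM = spec_facts[OF spM m] and FK = spec_facts[OF spK m]
  have Mc: "M \<in> carrier_mat m m" and Kc: "K \<in> carrier_mat m m" using FM(1) FK(1) unfolding symm_def by auto
  have th0: "\<theta> > 0" using th nu by (simp add: add_pos_nonneg)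
  define s where "s = sqrt (\<nu> * \<theta>)"
  have s0: "s > 0" using s_def nu th0 by simp
  define n where "n = m + m"
  have n0: "n > 0" using m n_def by simp
  define chi where "chi = Max (gf \<theta> \<alpha> ` spectrum M)"
  define vt where "vt = Max (gf s \<alpha> ` spectrum K)"
  have chib: "0 \<le> chi" "chi \<le> 1" unfolding chi_def using chi_bounds[OF FM(2,3,4) al th0] by auto
  have vtb: "0 \<le> vt" "vt \<le> 1" unfolding vt_def using chi_bounds[OF FK(2,3,4) al s0] by auto
  define a where "a = complex_of_real \<alpha>"
  define H1 where "H1 = blockdiag m (cmat M)"
  define H2 where "H2 = blockdiag m (cmat K)"
  define R where "R = Rmat m \<nu> \<omega> \<theta>"
  define I where "I = (1\<^sub>m n :: complex mat)"
  define Am where "Am = a \<cdot>\<^sub>m I + complex_of_real s \<cdot>\<^sub>m H2"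
  define Bm where "Bm = a \<cdot>\<^sub>m I + complex_of_real \<theta> \<cdot>\<^sub>m (R * H1)"
  define Cm where "Cm = a \<cdot>\<^sub>m I + complex_of_real \<theta> \<cdot>\<^sub>m H1"
  define Dm where "Dm = a \<cdot>\<^sub>m I + complex_of_real (- s) \<cdot>\<^sub>m (R * H2)"
  have H1c: "H1 \<in> carrier_mat n n" unfolding H1_def n_def by (rule blockdiag_carrier) (use Mc in simp)
  have H2c: "H2 \<in> carrier_mat n n" unfolding H2_def n_def by (rule blockdiag_carrier) (use Kc in simp)
  have Rc: "R \<in> carrier_mat n n" unfolding R_def n_def by (rule Rmat_carrier)
  have Ic: "I \<in> carrier_mat n n" unfolding I_def by simp
  have RH1: "R * H1 \<in> carrier_mat n n" using Rc H1c by simp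
  have RH2: "R * H2 \<in> carrier_mat n n" using Rc H2c by simp
  have Amc: "Am \<in> carrier_mat n n" unfolding Am_def using Ic H2c by simp
  have Bmc: "Bm \<in> carrier_mat n n" unfolding Bm_def using Ic RH1 by simp
  have Cmc: "Cm \<in> carrier_mat n n" unfolding Cm_def using Ic H1c by simp
  have Dmc: "Dm \<in> carrier_mat n n" unfolding Dm_def using Ic RH2 by simp
  have Pdef: "MBAS m M K \<nu> \<omega> \<alpha> = minv Am * Bm * minv Cm * Dm"
  proof -
    have "a \<cdot>\<^sub>m I - complex_of_real s \<cdot>\<^sub>m (R * H2) = Dm"
      unfolding Dm_def using Ic RH2 by (intro eq_matI) auto
    then show ?thesis
      unfolding MBAS_def Let_def th[symmetric] mult_2 n_def[symmetric] I_def[symmetric] a_def[symmetric]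
        s_def[symmetric] H1_def[symmetric] H2_def[symmetric] R_def[symmetric]
        Am_def[symmetric] Bm_def[symmetric] Cm_def[symmetric] by simp
  qed
  have vecA: "Am *\<^sub>v y = complex_of_real \<alpha> \<cdot>\<^sub>v y + complex_of_real s \<cdot>\<^sub>v (H2 *\<^sub>v y)" if y: "y \<in> carrier_vec n" for y
    unfolding Am_def using y Ic H2c
    by (simp add: add_mult_distrib_mat_vec[of _ n n] smat_vec[of _ n n] I_def a_def)
  have vecC: "Cm *\<^sub>v y = complex_of_real \<alpha> \<cdot>\<^sub>v y + complex_of_real \<theta> \<cdot>\<^sub>v (H1 *\<^sub>v y)" if y: "y \<in> carrier_vec n" for y
    unfolding Cm_def using y Ic H1c
    by (simp add: add_mult_distrib_mat_vec[of _ n n] smat_vec[of _ n n] I_def a_def)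
  have vecB: "Bm *\<^sub>v y = complex_of_real \<alpha> \<cdot>\<^sub>v y + complex_of_real \<theta> \<cdot>\<^sub>v (R *\<^sub>v (H1 *\<^sub>v y))" if y: "y \<in> carrier_vec n" for y
    unfolding Bm_def using y Ic H1c Rc RH1
    by (simp add: add_mult_distrib_mat_vec[of _ n n] smat_vec[of _ n n] I_def a_def assoc_mult_mat_vec[of _ n n _ n])
  have vecD: "Dm *\<^sub>v y = complex_of_real \<alpha> \<cdot>\<^sub>v y + complex_of_real (- s) \<cdot>\<^sub>v (R *\<^sub>v (H2 *\<^sub>v y))" if y: "y \<in> carrier_vec n" for y
    unfolding Dm_def using y Ic H2c Rc RH2
    by (simp add: add_mult_distrib_mat_vec[of _ n n] smat_vec[of _ n n] I_def a_def assoc_mult_mat_vec[of _ n n _ n])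
  have NC: "\<alpha>\<^sup>2 * nsq y + \<theta>\<^sup>2 * nsq (H1 *\<^sub>v y) \<le> chi\<^sup>2 * nsq (Cm *\<^sub>v y)" if y: "y \<in> carrier_vec n" for y
    unfolding vecC[OF y] chi_def H1_def using NI[OF FM(1,2,3,4) al th0, of y] y n_def by simp
  have NA: "\<alpha>\<^sup>2 * nsq y + s\<^sup>2 * nsq (H2 *\<^sub>v y) \<le> vt\<^sup>2 * nsq (Am *\<^sub>v y)" if y: "y \<in> carrier_vec n" for y
    unfolding vecA[OF y] vt_def H2_def using NI[OF FK(1,2,3,4) al s0, of y] y n_def by simp
  have EB: "nsq (Bm *\<^sub>v y) = \<alpha>\<^sup>2 * nsq y + \<theta>\<^sup>2 * nsq (H1 *\<^sub>v y)" if y: "y \<in> carrier_vec n" for y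
    unfolding vecB[OF y] H1_def R_def using BNR[OF nu th FM(1), of y] y n_def by simp
  have ED: "nsq (Dm *\<^sub>v y) = \<alpha>\<^sup>2 * nsq y + s\<^sup>2 * nsq (H2 *\<^sub>v y)" if y: "y \<in> carrier_vec n" for y
    unfolding vecD[OF y] H2_def R_def using BNR[OF nu th FK(1), of y, where al = \<alpha> and t = "- s"] y n_def by simp
  have injC: "y = 0\<^sub>v n" if y: "y \<in> carrier_vec n" and z: "Cm *\<^sub>v y = 0\<^sub>v n" for y
  proof -
    have "nsq (Cm *\<^sub>v y) = 0" using z by (simp add: nsq_sum)
    then have "\<alpha>\<^sup>2 * nsq y + \<theta>\<^sup>2 * nsq (H1 *\<^sub>v y) \<le> 0" using NC[OF y] by simp
    then have "\<alpha>\<^sup>2 * nsq y \<le> 0" using nsq_nonneg[of "H1 *\<^sub>v y"] by (smt (verit) zero_le_power2 mult_nonneg_nonneg)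
    then have "nsq y = 0" using al nsq_nonneg[of y] by (smt (verit) mult_pos_pos zero_less_power)
    then show ?thesis using nsq_eq_0[OF y] by simp
  qed
  have injA: "y = 0\<^sub>v n" if y: "y \<in> carrier_vec n" and z: "Am *\<^sub>v y = 0\<^sub>v n" for y
  proof -
    have "nsq (Am *\<^sub>v y) = 0" using z by (simp add: nsq_sum)
    then have "\<alpha>\<^sup>2 * nsq y + s\<^sup>2 * nsq (H2 *\<^sub>v y) \<le> 0" using NA[OF y] by simp
    then have "\<alpha>\<^sup>2 * nsq y \<le> 0" using nsq_nonneg[of "H2 *\<^sub>v y"] by (smt (verit) zero_le_power2 mult_nonneg_nonneg)
    then have "nsq y = 0" using al nsq_nonneg[of y] by (smt (verit) mult_pos_pos zero_less_power)
    then show ?thesis using nsq_eq_0[OF y] by simp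
  qed
  have iC: "Cm * minv Cm = 1\<^sub>m n" "minv Cm * Cm = 1\<^sub>m n" "minv Cm \<in> carrier_mat n n"
    by (rule minv_props[OF Cmc], rule injC, assumption+)+
  have iA: "Am * minv Am = 1\<^sub>m n" "minv Am * Am = 1\<^sub>m n" "minv Am \<in> carrier_mat n n"
    by (rule minv_props[OF Amc], rule injA, assumption+)+
  define P where "P = minv Am * Bm * minv Cm * Dm"
  have Pc: "P \<in> carrier_mat n n" unfolding P_def
    by (intro mult_carrier_mat[of _ n n _ n] iA(3) iC(3) Bmc Dmc)
  have bound: "cmod l \<le> chi * vt" if l: "l \<in> spectrum P" for l
  proof -
    obtain v where v: "v \<in> carrier_vec n" "v \<noteq> 0\<^sub>v n" "P *\<^sub>v v = l \<cdot>\<^sub>v v"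
      using l Pc unfolding spectrum_def eigenvalue_def eigenvector_def by auto
    define y where "y = minv Cm *\<^sub>v (Dm *\<^sub>v v)"
    have dv: "Dm *\<^sub>v v \<in> carrier_vec n" using Dmc v by simp
    have yc: "y \<in> carrier_vec n" unfolding y_def using iC(3) dv by simp
    have Cy: "Cm *\<^sub>v y = Dm *\<^sub>v v"
    proof -
      have "Cm *\<^sub>v y = (Cm * minv Cm) *\<^sub>v (Dm *\<^sub>v v)"
        unfolding y_def by (rule assoc_mult_mat_vec[OF Cmc iC(3) dv, symmetric])
      also have "\<dots> = Dm *\<^sub>v v" unfolding iC(1) using dv by simp
      finally show ?thesis .
    qed
    have AB: "minv Am * Bm \<in> carrier_mat n n" using iA(3) Bmc by simp
    have ABC: "minv Am * Bm * minv Cm \<in> carrier_mat n n" using AB iC(3) by simp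
    have Pv: "P *\<^sub>v v = minv Am *\<^sub>v (Bm *\<^sub>v y)"
      unfolding P_def y_def assoc_mult_mat_vec[OF ABC Dmc v(1)] assoc_mult_mat_vec[OF AB iC(3) dv]
        assoc_mult_mat_vec[OF iA(3) Bmc mult_mat_vec_carrier[OF iC(3) dv]] ..
    have By: "Bm *\<^sub>v y = l \<cdot>\<^sub>v (Am *\<^sub>v v)"
    proof -
      have byc: "Bm *\<^sub>v y \<in> carrier_vec n" using Bmc yc by simp
      have "Am *\<^sub>v (minv Am *\<^sub>v (Bm *\<^sub>v y)) = (Am * minv Am) *\<^sub>v (Bm *\<^sub>v y)"
        by (rule assoc_mult_mat_vec[OF Amc iA(3) byc, symmetric])
      also have "\<dots> = Bm *\<^sub>v y" unfolding iA(1) using byc by simp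
      finally have "Bm *\<^sub>v y = Am *\<^sub>v (minv Am *\<^sub>v (Bm *\<^sub>v y))" by simp
      also have "\<dots> = Am *\<^sub>v (l \<cdot>\<^sub>v v)" using Pv v(3) by simp
      also have "\<dots> = l \<cdot>\<^sub>v (Am *\<^sub>v v)" using Amc v by (simp add: mult_mat_vec[of _ n n])
      finally show ?thesis .
    qed
    have av: "Am *\<^sub>v v \<in> carrier_vec n" using Amc v by simp
    have avn: "nsq (Am *\<^sub>v v) > 0"
    proof -
      have "Am *\<^sub>v v \<noteq> 0\<^sub>v n" using injA[OF v(1)] v(2) by auto
      then have "nsq (Am *\<^sub>v v) \<noteq> 0" using nsq_eq_0[OF av] by simp
      then show ?thesis using nsq_nonneg[of "Am *\<^sub>v v"] by simp
    qed
    define A where "A = nsq (Am *\<^sub>v v)"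
    have h1: "(cmod l)\<^sup>2 * A = nsq (Bm *\<^sub>v y)" unfolding By nsq_smult[OF av] A_def ..
    have h2: "nsq (Bm *\<^sub>v y) \<le> chi\<^sup>2 * nsq (Cm *\<^sub>v y)" using EB[OF yc] NC[OF yc] by linarith
    have h4: "nsq (Dm *\<^sub>v v) \<le> vt\<^sup>2 * A" using ED[OF v(1)] NA[OF v(1)] unfolding A_def by linarith
    have "chi\<^sup>2 * nsq (Cm *\<^sub>v y) \<le> chi\<^sup>2 * (vt\<^sup>2 * A)" unfolding Cy
      by (rule mult_left_mono[OF h4 zero_le_power2])
    also have "\<dots> = (chi * vt)\<^sup>2 * A" by (simp add: power_mult_distrib)
    finally have "(cmod l)\<^sup>2 * A \<le> (chi * vt)\<^sup>2 * A" using h1 h2 by linarith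
    then have "(cmod l)\<^sup>2 \<le> (chi * vt)\<^sup>2" using avn unfolding A_def[symmetric] by (rule mult_right_le_imp_le)
    moreover have "0 \<le> chi * vt" using chib vtb by simp
    ultimately show ?thesis by (rule power2_le_imp_le)
  qed
  obtain l where l: "l \<in> spectrum P" "spectral_radius P = cmod l"
    using spectral_radius_mem_max(1)[OF Pc n0] by auto
  have "spectral_radius P \<le> chi * vt" using bound[OF l(1)] l(2) by simp
  moreover have "chi * vt \<le> chi" using chib vtb by (simp add: mult_left_le)
  moreover have "chi * vt \<le> vt" using chib vtb by (simp add: mult_left_le_one_le)
  ultimately show ?thesis unfolding Pdef P_def[symmetric] chi_def vt_def s_def by simp
qed



lemma chi_eq: "chi M \<theta> \<alpha> = Max (gf \<theta> \<alpha> ` spectrum M)"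
  unfolding chi_def gf_def ..

lemma vtheta_eq: assumes "\<nu> * \<theta> \<ge> 0"
  shows "vtheta K \<nu> \<theta> \<alpha> = Max (gf (sqrt (\<nu> * \<theta>)) \<alpha> ` spectrum K)"
  unfolding vtheta_def gf_def using assms by simp

theorem mainTheorem4:
  fixes m :: nat and M K :: "real mat" and \<nu> \<omega> \<theta> :: real
  assumes "m > 0"
    and "spd_mat m M" and "spd_mat m K"
    and "\<nu> > 0" and "\<omega> > 0"
    and "\<theta> = 1 + \<nu> * \<omega>\<^sup>2"
  shows "(\<forall>\<alpha>>0. chi M \<theta> (\<theta> * sqrt (Min (spectrum M) * Max (spectrum M))) \<le> chi M \<theta> \<alpha>)
       \<and> (\<forall>\<alpha>>0. vtheta K \<nu> \<theta> (sqrt (\<nu> * \<theta> * Min (spectrum K) * Max (spectrum K))) \<le> vtheta K \<nu> \<theta> \<alpha>)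
       \<and> (\<forall>\<alpha>>0. spectral_radius (MBAS m M K \<nu> \<omega> \<alpha>) \<le> chi M \<theta> \<alpha>
                 \<and> spectral_radius (MBAS m M K \<nu> \<omega> \<alpha>) \<le> vtheta K \<nu> \<theta> \<alpha>)"
proof -
  note FM = spec_facts[OF assms(2,1)] and FK = spec_facts[OF assms(3,1)]
  have th0: "\<theta> > 0" using assms(4,6) by (simp add: add_pos_nonneg)
  have nt: "\<nu> * \<theta> \<ge> 0" using assms(4) th0 by simp
  have s0: "sqrt (\<nu> * \<theta>) > 0" using assms(4) th0 by simp
  have p1: "\<forall>\<alpha>>0. chi M \<theta> (\<theta> * sqrt (Min (spectrum M) * Max (spectrum M))) \<le> chi M \<theta> \<alpha>"
    unfolding chi_eq using minA[OF FM(2,3,4) th0] by blast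
  have p2: "\<forall>\<alpha>>0. vtheta K \<nu> \<theta> (sqrt (\<nu> * \<theta> * Min (spectrum K) * Max (spectrum K))) \<le> vtheta K \<nu> \<theta> \<alpha>"
  proof (intro allI impI)
    fix \<alpha> :: real assume a: "\<alpha> > 0"
    have "sqrt (\<nu> * \<theta> * Min (spectrum K) * Max (spectrum K)) = sqrt (\<nu> * \<theta>) * sqrt (Min (spectrum K) * Max (spectrum K))"
      by (simp add: real_sqrt_mult mult.assoc)
    then show "vtheta K \<nu> \<theta> (sqrt (\<nu> * \<theta> * Min (spectrum K) * Max (spectrum K))) \<le> vtheta K \<nu> \<theta> \<alpha>"
      unfolding vtheta_eq[OF nt] using minA[OF FK(2,3,4) s0 a] by simp
  qed
  have p3: "\<forall>\<alpha>>0. spectral_radius (MBAS m M K \<nu> \<omega> \<alpha>) \<le> chi M \<theta> \<alpha>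
                 \<and> spectral_radius (MBAS m M K \<nu> \<omega> \<alpha>) \<le> vtheta K \<nu> \<theta> \<alpha>"
    unfolding chi_eq vtheta_eq[OF nt] using part3[OF assms(1,2,3,4,6)] by blast
  show ?thesis using p1 p2 p3 by blast
qed


end
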